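(* Let $m,n\ge 3$ and let $K=(U_m(a,b,c))^R$ and $L=(U_n(b,a,c))^R$. If $(m,n)\neq(4,4)$, then the state complexities of $K\cup L$, $K\cap L$ and $K\setminus L$ are each $(2^m-1)(2^n-1)+1$, and the state complexity of $K\oplus L$ is $2^{m+n-1}$. If $m=n=4$, the state complexities of $K\cup L$, $K\cap L$ and $K\setminus L$ are each $202$ and that of $K\oplus L$ is $116$.
   Context: The state complexity of a regular language is the number of states of its minimal complete DFA. For $n\ge 3$, $\mathcal{U}_n(a,b,c)$ is the DFA over $\{a,b,c\}$ with states $\{0,\dots,n-1\}$, initial state $0$, final states $\{n-1\}$, where $a$ maps $i\mapsto i+1\pmod n$, $b$ swaps $0$ and $1$ fixing other states, and $c$ maps $n-1$ to $0$ fixing other states; $U_n(a,b,c)$ is its language. $\mathcal{U}_n(b,a,c)$ and $U_n(b,a,c)$ are obtained by interchanging the roles of letters $a$ and $b$: in $\mathcal{U}_n(b,a,c)$, $b$ maps $i\mapsto i+1\pmod n$, $a$ swaps $0$ and $1$, and $c$ maps $n-1$ to $0$ (same states, initial state $0$, final states $\{n-1\}$). $L^R$ is the reversal of $L$; $\setminus$ is set difference, $\oplus$ is symmetric difference. *)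

theory Defs
  imports Main
begin

datatype letter = La | Lb | Lc

text \<open>Complete DFAs over the alphabet, with states drawn from nat
  (any finite state set can be relabelled by naturals).\<close>
definition is_dfa :: "nat set \<Rightarrow> nat \<Rightarrow> (nat \<Rightarrow> letter \<Rightarrow> nat) \<Rightarrow> nat set \<Rightarrow> bool" where
  "is_dfa Q q0 \<delta> F \<longleftrightarrow> finite Q \<and> q0 \<in> Q \<and> (\<forall>q\<in>Q. \<forall>x. \<delta> q x \<in> Q) \<and> F \<subseteq> Q"

definition dfa_lang :: "nat \<Rightarrow> (nat \<Rightarrow> letter \<Rightarrow> nat) \<Rightarrow> nat set \<Rightarrow> letter list set" where
  "dfa_lang q0 \<delta> F = {w. foldl \<delta> q0 w \<in> F}"

definition sc :: "letter list set \<Rightarrow> nat" where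
  "sc L = (LEAST k. \<exists>Q q0 \<delta> F. is_dfa Q q0 \<delta> F \<and> card Q = k \<and> dfa_lang q0 \<delta> F = L)"

definition U_delta :: "nat \<Rightarrow> letter \<Rightarrow> letter \<Rightarrow> letter \<Rightarrow> nat \<Rightarrow> letter \<Rightarrow> nat" where
  "U_delta n a b c q x =
     (if x = a then (q + 1) mod n
      else if x = b then (if q = 0 then 1 else if q = 1 then 0 else q)
      else if x = c then (if q = n - 1 then 0 else q)
      else q)"

definition U :: "nat \<Rightarrow> letter \<Rightarrow> letter \<Rightarrow> letter \<Rightarrow> letter list set" where
  "U n a b c = dfa_lang 0 (U_delta n a b c) {n - 1}"

definition reversal :: "letter list set \<Rightarrow> letter list set" where
  "reversal L = rev ` L"

definition symdiff :: "letter list set \<Rightarrow> letter list set \<Rightarrow> letter list set" where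
  "symdiff K L = (K - L) \<union> (L - K)"

end

theory Submission
  imports Defs
begin


definition Der :: "letter list \<Rightarrow> letter list set \<Rightarrow> letter list set" where
  "Der u L = {v. u @ v \<in> L}"

lemma foldl_in_Q: "is_dfa Q q0 \<delta> F \<Longrightarrow> q \<in> Q \<Longrightarrow> foldl \<delta> q w \<in> Q"
  by (induction w arbitrary: q) (auto simp: is_dfa_def)

lemma sc_lower:
  assumes "is_dfa Q q0 \<delta> F" "dfa_lang q0 \<delta> F = L"
  shows "card (range (\<lambda>u. Der u L)) \<le> card Q"
proof -
  have "range (\<lambda>u. Der u L) \<subseteq> (\<lambda>q. {v. foldl \<delta> q v \<in> F}) ` Q"
  proof
    fix X assume "X \<in> range (\<lambda>u. Der u L)"
    then obtain u where X: "X = Der u L" by auto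
    have "X = {v. foldl \<delta> (foldl \<delta> q0 u) v \<in> F}"
      using assms(2) by (auto simp: X Der_def dfa_lang_def)
    moreover have "foldl \<delta> q0 u \<in> Q" using assms(1) foldl_in_Q is_dfa_def by blast
    ultimately show "X \<in> (\<lambda>q. {v. foldl \<delta> q v \<in> F}) ` Q" by blast
  qed
  moreover have "finite Q" using assms(1) is_dfa_def by blast
  ultimately show ?thesis
    by (meson card_image_le card_mono finite_imageI le_trans)
qed

lemma Der_append: "Der (u @ v) L = Der v (Der u L)"
  by (auto simp: Der_def)

lemma sc_upper_ex:
  assumes fin: "finite (range (\<lambda>u. Der u L))"
  shows "\<exists>Q q0 \<delta> F. is_dfa Q q0 \<delta> F \<and> card Q = card (range (\<lambda>u. Der u L)) \<and> dfa_lang q0 \<delta> F = L"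
proof -
  define D where "D = range (\<lambda>u. Der u L)"
  define N where "N = card D"
  obtain h where h: "bij_betw h {0..<N} D"
    using ex_bij_betw_nat_finite[OF fin] unfolding N_def D_def by blast
  define g where "g = inv_into {0..<N} h"
  have hg: "\<And>X. X \<in> D \<Longrightarrow> h (g X) = X" "\<And>X. X \<in> D \<Longrightarrow> g X \<in> {0..<N}"
    using h unfolding g_def
    by (auto simp: bij_betw_def f_inv_into_f inv_into_into)
  define \<delta> where "\<delta> q x = g (Der [x] (h q))" for q x
  define F where "F = {q \<in> {0..<N}. [] \<in> h q}"
  define q0 where "q0 = g L"
  have "Der [] L = L" by (simp add: Der_def)
  then have LD: "L \<in> D" unfolding D_def by (metis rangeI)
  have DD: "X \<in> D \<Longrightarrow> Der [x] X \<in> D" for X x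
    unfolding D_def by (auto simp: Der_append[symmetric])
  have run: "h (foldl \<delta> q0 w) = Der w L \<and> foldl \<delta> q0 w \<in> {0..<N}" for w
  proof (induction w rule: rev_induct)
    case Nil
    then show ?case using hg LD by (simp add: q0_def Der_def)
  next
    case (snoc x w)
    have "Der (w @ [x]) L \<in> D" unfolding D_def by blast
    then show ?case using snoc hg by (simp add: \<delta>_def Der_append)
  qed
  have hD: "h q \<in> D" if "q \<in> {0..<N}" for q
    using h that by (auto simp: bij_betw_def)
  have "is_dfa {0..<N} q0 \<delta> F"
    unfolding is_dfa_def
  proof (intro conjI ballI allI)
    show "q0 \<in> {0..<N}" using hg(2)[OF LD] by (simp add: q0_def)
    show "\<delta> q x \<in> {0..<N}" if "q \<in> {0..<N}" for q x
      using hg(2)[OF DD[OF hD[OF that]]] by (simp add: \<delta>_def)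
  qed (auto simp: F_def)
  moreover have "dfa_lang q0 \<delta> F = L"
    using run by (auto simp: dfa_lang_def F_def Der_def)
  ultimately show ?thesis unfolding N_def D_def by (metis card_atLeastLessThan diff_zero)
qed

lemma sc_eq:
  assumes "finite (range (\<lambda>u. Der u L))"
  shows "sc L = card (range (\<lambda>u. Der u L))"
  unfolding sc_def
proof (rule Least_equality)
  show "\<exists>Q q0 \<delta> F. is_dfa Q q0 \<delta> F \<and> card Q = card (range (\<lambda>u. Der u L)) \<and> dfa_lang q0 \<delta> F = L"
    using sc_upper_ex[OF assms] .
  show "\<And>y. \<exists>Q q0 \<delta> F. is_dfa Q q0 \<delta> F \<and> card Q = y \<and> dfa_lang q0 \<delta> F = L \<Longrightarrow>
         card (range (\<lambda>u. Der u L)) \<le> y"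
    using sc_lower by blast
qed


definition F :: "nat \<Rightarrow> letter \<Rightarrow> letter \<Rightarrow> letter \<Rightarrow> letter list \<Rightarrow> nat \<Rightarrow> nat" where
  "F k a b c v q = foldl (U_delta k a b c) q v"

definition sw :: "nat \<Rightarrow> nat" where
  "sw q = (if q = 0 then 1 else if q = 1 then 0 else q)"

lemma F_Nil[simp]: "F k a b c [] q = q" by (simp add: F_def)
lemma F_append: "F k a b c (v @ w) q = F k a b c w (F k a b c v q)" by (simp add: F_def)
lemma F_Cons: "F k a b c (x # v) q = F k a b c v (U_delta k a b c q x)" by (simp add: F_def)

lemma Ud_a[simp]: "U_delta k a b c q a = (q + 1) mod k" by (simp add: U_delta_def)
lemma Ud_b[simp]: "b \<noteq> a \<Longrightarrow> U_delta k a b c q b = sw q" by (simp add: U_delta_def sw_def)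
lemma Ud_c[simp]: "c \<noteq> a \<Longrightarrow> c \<noteq> b \<Longrightarrow> U_delta k a b c q c = (if q = k - 1 then 0 else q)"
  by (simp add: U_delta_def)

lemma sw_lt: "k \<ge> 2 \<Longrightarrow> q < k \<Longrightarrow> sw q < k" by (simp add: sw_def)
lemma sw_sw[simp]: "sw (sw q) = q" by (simp add: sw_def)

lemma Ud_lt: "k \<ge> 2 \<Longrightarrow> q < k \<Longrightarrow> U_delta k a b c q x < k"
  by (auto simp: U_delta_def)

lemma F_lt: "k \<ge> 2 \<Longrightarrow> q < k \<Longrightarrow> F k a b c v q < k"
  by (induction v arbitrary: q) (auto simp: F_Cons Ud_lt)

lemma F_rep_a: "q < k \<Longrightarrow> F k a b c (replicate j a) q = (q + j) mod k"
proof (induction j arbitrary: q)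
  case 0 then show ?case by simp
next
  case (Suc j)
  have "F k a b c (replicate (Suc j) a) q = F k a b c (replicate j a) ((q+1) mod k)"
    by (simp add: F_Cons)
  also have "\<dots> = ((q + 1) mod k + j) mod k" using Suc by simp
  also have "\<dots> = (q + Suc j) mod k" by (simp add: mod_add_left_eq)
  finally show ?case .
qed

lemma F_rep_b: "b \<noteq> a \<Longrightarrow> F k a b c (replicate j b) q = (if even j then q else sw q)"
  by (induction j arbitrary: q) (auto simp: F_Cons)

definition Sset :: "nat \<Rightarrow> letter \<Rightarrow> letter \<Rightarrow> letter \<Rightarrow> letter list \<Rightarrow> nat set" where
  "Sset k a b c u = {q. q < k \<and> F k a b c (rev u) q = k - 1}"

definition Rset :: "nat \<Rightarrow> nat \<Rightarrow> letter \<Rightarrow> letter \<Rightarrow> letter \<Rightarrow> (nat set \<times> nat set) set" where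
  "Rset m n a b c = range (\<lambda>u. (Sset m a b c u, Sset n b a c u))"

definition Hrel :: "nat \<Rightarrow> nat \<Rightarrow> (bool \<Rightarrow> bool \<Rightarrow> bool) \<Rightarrow> nat set \<times> nat set \<Rightarrow> (nat \<times> nat) set" where
  "Hrel m n op ST = {(p,q). p < m \<and> q < n \<and> op (p \<in> fst ST) (q \<in> snd ST)}"

definition Jfull :: "nat \<Rightarrow> nat \<Rightarrow> letter \<Rightarrow> letter \<Rightarrow> letter \<Rightarrow> bool" where
  "Jfull m n a b c \<longleftrightarrow> (\<forall>p<m. \<forall>q<n. \<exists>w. F m a b c w 0 = p \<and> F n b a c w 0 = q)"

lemma in_reversal: "w \<in> reversal L \<longleftrightarrow> rev w \<in> L"
  unfolding reversal_def by (metis image_iff rev_rev_ident)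

lemma in_rev_U: "w \<in> reversal (U k a b c) \<longleftrightarrow> F k a b c (rev w) 0 = k - 1"
  by (simp add: in_reversal U_def dfa_lang_def F_def)

lemma Der_op:
  assumes "m \<ge> 2" "n \<ge> 2"
  shows "Der u {w. op (w \<in> reversal (U m a b c)) (w \<in> reversal (U n b a c))}
    = {v. (F m a b c (rev v) 0, F n b a c (rev v) 0) \<in> Hrel m n op (Sset m a b c u, Sset n b a c u)}"
proof -
  have "F m a b c (rev v) 0 < m" "F n b a c (rev v) 0 < n" for v
    using assms F_lt by auto
  then show ?thesis
    by (auto simp: Der_def in_rev_U F_append Hrel_def Sset_def)
qed

lemma sc_via_R:
  assumes "m \<ge> 2" "n \<ge> 2" "Jfull m n a b c"
  shows "sc {w. op (w \<in> reversal (U m a b c)) (w \<in> reversal (U n b a c))}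
     = card (Hrel m n op ` Rset m n a b c)"
proof -
  let ?L = "{w. op (w \<in> reversal (U m a b c)) (w \<in> reversal (U n b a c))}"
  define Dm where "Dm X = {v. (F m a b c (rev v) 0, F n b a c (rev v) 0) \<in> X}" for X
  have 1: "range (\<lambda>u. Der u ?L) = Dm ` (Hrel m n op ` Rset m n a b c)"
    unfolding Rset_def Dm_def using Der_op[OF assms(1,2)] by (auto simp: image_image)
  have sub: "Hrel m n op ` Rset m n a b c \<subseteq> Pow ({..<m} \<times> {..<n})"
    by (auto simp: Hrel_def)
  have inj: "inj_on Dm (Pow ({..<m} \<times> {..<n}))"
  proof (rule inj_onI)
    fix X Y assume X: "X \<in> Pow ({..<m} \<times> {..<n})" and Y: "Y \<in> Pow ({..<m} \<times> {..<n})"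
      and eq: "Dm X = Dm Y"
    show "X = Y"
    proof (rule set_eqI)
      fix z show "z \<in> X \<longleftrightarrow> z \<in> Y"
      proof (cases "fst z < m \<and> snd z < n")
        case True
        then obtain w where w: "F m a b c w 0 = fst z" "F n b a c w 0 = snd z"
          using assms(3) unfolding Jfull_def by blast
        have "rev w \<in> Dm X \<longleftrightarrow> rev w \<in> Dm Y" using eq by simp
        then show ?thesis using w by (simp add: Dm_def)
      next
        case False then show ?thesis using X Y by auto
      qed
    qed
  qed
  have fin: "finite (Hrel m n op ` Rset m n a b c)"
    using sub by (meson finite_Pow_iff finite_SigmaI finite_lessThan finite_subset)
  have "finite (range (\<lambda>u. Der u ?L))" using 1 fin by simp
  then have "sc ?L = card (range (\<lambda>u. Der u ?L))" by (rule sc_eq)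
  also have "\<dots> = card (Hrel m n op ` Rset m n a b c)"
    unfolding 1 by (rule card_image) (meson inj inj_on_subset sub)
  finally show ?thesis .
qed


definition kern :: "nat \<Rightarrow> nat \<Rightarrow> letter \<Rightarrow> letter \<Rightarrow> letter \<Rightarrow> (nat \<Rightarrow> nat) \<Rightarrow> bool" where
  "kern m n a b c \<sigma> \<longleftrightarrow> (\<exists>v. (\<forall>q<n. F n b a c v q = q) \<and> (\<forall>q<m. F m a b c v q = \<sigma> q))"

definition dl :: "letter \<Rightarrow> letter \<Rightarrow> letter \<Rightarrow> bool" where
  "dl a b c \<longleftrightarrow> a \<noteq> b \<and> a \<noteq> c \<and> b \<noteq> c"

lemma kern_cong: "kern m n a b c \<sigma> \<Longrightarrow> (\<And>q. q < m \<Longrightarrow> \<sigma> q = \<tau> q) \<Longrightarrow> kern m n a b c \<tau>"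
  unfolding kern_def by metis

lemma kern_lt: "m \<ge> 2 \<Longrightarrow> kern m n a b c \<sigma> \<Longrightarrow> q < m \<Longrightarrow> \<sigma> q < m"
  unfolding kern_def using F_lt by metis

lemma kern_id: "kern m n a b c (\<lambda>q. q)"
  unfolding kern_def by (rule exI[of _ "[]"]) simp

lemma kern_comp:
  assumes "m \<ge> 2" "kern m n a b c \<sigma>" "kern m n a b c \<tau>"
  shows "kern m n a b c (\<lambda>q. \<tau> (\<sigma> q))"
proof -
  obtain v where v: "\<forall>q<n. F n b a c v q = q" "\<forall>q<m. F m a b c v q = \<sigma> q"
    using assms(2) unfolding kern_def by blast
  obtain w where w: "\<forall>q<n. F n b a c w q = q" "\<forall>q<m. F m a b c w q = \<tau> q"
    using assms(3) unfolding kern_def by blast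
  show ?thesis unfolding kern_def
    apply (rule exI[of _ "v @ w"])
    using v w kern_lt[OF assms(1,2)] by (simp add: F_append)
qed

lemma kern_pow:
  assumes "m \<ge> 2" "kern m n a b c \<sigma>"
  shows "kern m n a b c (\<sigma> ^^ j)"
proof (induction j)
  case 0 then show ?case using kern_id by (simp add: id_def)
next
  case (Suc j)
  have "kern m n a b c (\<lambda>q. \<sigma> ((\<sigma> ^^ j) q))" using kern_comp[OF assms(1) Suc assms(2)] .
  then show ?case by (simp add: comp_def)
qed

lemma kern_rho2:
  assumes "dl a b c"
  shows "kern m n a b c (\<lambda>q. (q + 2) mod m)"
proof -
  have ab: "a \<noteq> b" using assms by (simp add: dl_def)
  show ?thesis unfolding kern_def
  proof (rule exI[of _ "[a,a]"], intro conjI allI impI)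
    fix q show "F n b a c [a, a] q = q" using ab by (simp add: F_Cons)
  next
    fix q show "F m a b c [a, a] q = (q + 2) mod m"
      by (simp add: F_Cons mod_Suc_eq)
  qed
qed

lemma kern_conjA:
  assumes "dl a b c" "m \<ge> 2" "n \<ge> 2" "kern m n a b c \<sigma>"
  shows "kern m n a b c (\<lambda>q. (\<sigma> ((q + 1) mod m) + (2 * m - 1)) mod m)"
proof -
  have ab: "b \<noteq> a" using assms by (auto simp: dl_def)
  obtain v where v: "\<forall>q<n. F n b a c v q = q" "\<forall>q<m. F m a b c v q = \<sigma> q"
    using assms(4) unfolding kern_def by blast
  have lt: "q < m \<Longrightarrow> \<sigma> q < m" for q using kern_lt[OF assms(2,4)] .
  show ?thesis unfolding kern_def
  proof (rule exI[of _ "[a] @ v @ replicate (2*m-1) a"], intro conjI allI impI)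
    fix q assume q: "q < n"
    have "sw q < n" using sw_lt assms(3) q by blast
    moreover have "odd (2 * m - 1)" using assms(2) by simp
    ultimately show "F n b a c ([a] @ v @ replicate (2 * m - 1) a) q = q"
      using ab v(1) by (simp add: F_append F_Cons F_rep_b)
  next
    fix q assume q: "q < m"
    have "(q + 1) mod m < m" using assms(2) by simp
    then show "F m a b c ([a] @ v @ replicate (2 * m - 1) a) q = (\<sigma> ((q + 1) mod m) + (2 * m - 1)) mod m"
      using v(2) lt by (simp add: F_append F_Cons F_rep_a)
  qed
qed

lemma kern_conjB:
  assumes "dl a b c" "m \<ge> 2" "n \<ge> 2" "kern m n a b c \<sigma>"
  shows "kern m n a b c (\<lambda>q. sw (\<sigma> (sw q)))"
proof -
  have ab: "b \<noteq> a" using assms by (auto simp: dl_def)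
  obtain v where v: "\<forall>q<n. F n b a c v q = q" "\<forall>q<m. F m a b c v q = \<sigma> q"
    using assms(4) unfolding kern_def by blast
  show ?thesis unfolding kern_def
  proof (rule exI[of _ "[b] @ v @ replicate (2*n-1) b"], intro conjI allI impI)
    fix q assume q: "q < n"
    have 1: "(q + 1) mod n < n" using assms(3) by simp
    have "((q + 1) mod n + (2 * n - 1)) mod n = q"
    proof -
      have "((q + 1) mod n + (2 * n - 1)) mod n = (q + 1 + (2 * n - 1)) mod n"
        by (simp add: mod_add_left_eq)
      also have "q + 1 + (2 * n - 1) = q + n * 2" using assms(3) by simp
      also have "(q + n * 2) mod n = q" using q by simp
      finally show ?thesis .
    qed
    then show "F n b a c ([b] @ v @ replicate (2 * n - 1) b) q = q"
      using ab v(1) 1 by (simp add: F_append F_Cons F_rep_a)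
  next
    fix q assume q: "q < m"
    have "sw q < m" using sw_lt assms(2) q by blast
    moreover have "odd (2 * n - 1)" using assms(3) by simp
    ultimately show "F m a b c ([b] @ v @ replicate (2 * n - 1) b) q = sw (\<sigma> (sw q))"
      using v(2) ab by (simp add: F_append F_Cons F_rep_b)
  qed
qed

lemma kern_bn:
  assumes "dl a b c" "odd n"
  shows "kern m n a b c sw"
proof -
  have ab: "b \<noteq> a" using assms by (auto simp: dl_def)
  show ?thesis unfolding kern_def
    apply (rule exI[of _ "replicate n b"])
    using ab assms(2) by (simp add: F_rep_a F_rep_b)
qed


definition sc1 :: "nat \<Rightarrow> nat \<Rightarrow> nat" where "sc1 m q = (q + 1) mod m"

definition cyc3 :: "nat \<Rightarrow> nat \<Rightarrow> nat \<Rightarrow> nat" where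
  "cyc3 m i q = (if q = i then sc1 m (sc1 m i) else if q = sc1 m i then i
     else if q = sc1 m (sc1 m i) then sc1 m i else q)"

lemma sc1_lt: "0 < m \<Longrightarrow> sc1 m q < m" by (simp add: sc1_def)

lemma modk: "(x::nat) < m \<Longrightarrow> k \<le> m \<Longrightarrow> (x + k) mod m = (if x + k < m then x + k else x + k - m)"
  by (simp add: mod_if)

lemma pr_mod: "(x::nat) < m \<Longrightarrow> (x + (2 * m - 1)) mod m = (if x = 0 then m - 1 else x - 1)"
proof -
  assume x: "x < m"
  have "x + (2 * m - 1) = (x + (m - 1)) + m" using x by simp
  then have "(x + (2 * m - 1)) mod m = (x + (m - 1)) mod m" by (metis mod_add_self2)
  also have "\<dots> = (if x = 0 then m - 1 else x - 1)"
  proof (cases "x = 0")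
    case False
    then have "x + (m - 1) = (x - 1) + m" using x by simp
    then have "(x + (m - 1)) mod m = (x - 1) mod m" by (metis mod_add_self2)
    then show ?thesis using False x by simp
  qed (use x in simp)
  finally show ?thesis .
qed

lemma sc1_eq: "(q::nat) < m \<Longrightarrow> sc1 m q = (if q = m - 1 then 0 else q + 1)"
  by (auto simp: sc1_def mod_if)

lemma pr_sc1: "q < m \<Longrightarrow> (sc1 m q + (2 * m - 1)) mod m = q"
proof -
  assume q: "q < m"
  then have "sc1 m q < m" using sc1_lt[of m q] by simp
  then show ?thesis using pr_mod[of "sc1 m q" m] q by (simp add: sc1_eq)
qed

lemma sc1_inj: "x < m \<Longrightarrow> y < m \<Longrightarrow> sc1 m x = sc1 m y \<longleftrightarrow> x = y"
  by (metis pr_sc1)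

lemma cyc3_conj:
  assumes "m \<ge> 3" "i < m" "q < m"
  shows "(cyc3 m (sc1 m i) ((q + 1) mod m) + (2 * m - 1)) mod m = cyc3 m i q"
proof -
  have p: "0 < m" using assms by simp
  have l1: "sc1 m i < m" and l2: "sc1 m (sc1 m i) < m" and l3: "sc1 m (sc1 m (sc1 m i)) < m"
    using sc1_lt[OF p] by auto
  have e: "(q + 1) mod m = sc1 m q" by (simp add: sc1_def)
  show ?thesis
    unfolding e cyc3_def
    using assms l1 l2 l3 sc1_inj[OF assms(3)] pr_sc1 by auto
qed

lemma kern_cyc_all:
  assumes "dl a b c" "m \<ge> 3" "n \<ge> 2" "kern m n a b c (cyc3 m (m - 1))"
  shows "i < m \<Longrightarrow> kern m n a b c (cyc3 m i)"
proof -
  have "d < m \<Longrightarrow> kern m n a b c (cyc3 m (m - 1 - d))" for d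
  proof (induction d)
    case 0 then show ?case using assms(4) by simp
  next
    case (Suc d)
    define i where "i = m - 1 - Suc d"
    have i: "i < m" "sc1 m i = m - 1 - d" using Suc.prems by (auto simp: i_def sc1_eq)
    have "kern m n a b c (\<lambda>q. (cyc3 m (sc1 m i) ((q + 1) mod m) + (2 * m - 1)) mod m)"
      using kern_conjA[OF assms(1) _ assms(3)] Suc i assms(2) by simp
    then show ?case unfolding i_def[symmetric]
      using cyc3_conj[OF assms(2) i(1)] by (rule kern_cong)
  qed
  moreover assume "i < m"
  ultimately show ?thesis by (metis diff_diff_cancel less_imp_diff_less Suc_pred' assms(2)
        less_eq_Suc_le Suc_leI diff_Suc_1 le_less_trans zero_less_Suc gr0I not_less_eq_eq)
qed


lemma lt3_cases: "(q::nat) < 3 \<Longrightarrow> q = 0 \<or> q = 1 \<or> q = 2" by auto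
lemma lt4_cases: "(q::nat) < 4 \<Longrightarrow> q = 0 \<or> q = 1 \<or> q = 2 \<or> q = 3" by auto

lemma kern_c0_3:
  assumes "dl a b c"
  shows "kern 3 n a b c (cyc3 3 2)"
  using kern_rho2[OF assms, of 3 n]
  by (rule kern_cong) (auto dest!: lt3_cases simp: cyc3_def sc1_def)

lemma kern_c0_4odd:
  assumes "dl a b c" "odd n" "n \<ge> 3"
  shows "kern 4 n a b c (cyc3 4 3)"
proof -
  have s: "kern 4 n a b c sw" using kern_bn[OF assms(1,2)] .
  have x: "kern 4 n a b c (\<lambda>q. (sw ((q + 1) mod 4) + (2 * 4 - 1)) mod 4)"
    using kern_conjA[OF assms(1) _ _ s] assms by simp
  have "kern 4 n a b c (\<lambda>q. sw ((sw ((q + 1) mod 4) + (2 * 4 - 1)) mod 4))"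
    using kern_comp[OF _ x s] by simp
  then show ?thesis
    by (rule kern_cong) (auto dest!: lt4_cases simp: cyc3_def sc1_def sw_def)
qed

definition phi :: "nat \<Rightarrow> nat \<Rightarrow> nat" where
  "phi n q = (if q = 0 then 1 else if q = 1 then 0 else if q = n - 3 then n - 2
     else if q = n - 2 then n - 3 else q)"

lemma kern_W:
  assumes "dl a b c" "even n" "n \<ge> 6" "m \<ge> 2"
  shows "kern m n a b c (\<lambda>q. F m a b c (a # replicate 3 b @ a # replicate (n - 3) b)
                               (F m a b c (a # replicate 3 b @ a # replicate (n - 3) b) q))"
proof -
  have ab: "b \<noteq> a" using assms by (auto simp: dl_def)
  define w where "w = a # replicate 3 b @ a # replicate (n - 3) b"
  have T: "F n b a c w q = phi n q" if q: "q < n" for q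
  proof -
    have swq: "sw q < n" using sw_lt q assms by simp
    have m1: "(sw q + 3) mod n = (if sw q + 3 < n then sw q + 3 else sw q + 3 - n)"
      using swq assms by (simp add: modk)
    have m1l: "(sw q + 3) mod n < n" using assms by simp
    have swl: "sw ((sw q + 3) mod n) < n" using sw_lt assms m1l by simp
    have m2: "(x + (n - 3)) mod n = (if 3 \<le> x then x - 3 else x + n - 3)" if "x < n" for x
    proof (cases "3 \<le> x")
      case True
      then have "x + (n - 3) = (x - 3) + n" using assms by simp
      then have "(x + (n - 3)) mod n = (x - 3) mod n" by (metis mod_add_self2)
      then show ?thesis using True that by simp
    qed (use that assms in simp)
    have "F n b a c w q = (sw ((sw q + 3) mod n) + (n - 3)) mod n"
      using ab q swq m1l swl by (simp add: w_def F_Cons F_append F_rep_a)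
    also have "\<dots> = (if 3 \<le> sw ((sw q + 3) mod n) then sw ((sw q + 3) mod n) - 3 else sw ((sw q + 3) mod n) + n - 3)"
      using m2[OF swl] .
    also have "\<dots> = phi n q"
      unfolding m1 using q assms by (simp add: phi_def sw_def, arith)
    finally show ?thesis .
  qed
  have "phi n q < n" if "q < n" for q using that assms by (auto simp: phi_def)
  moreover have "phi n (phi n q) = q" if "q < n" for q using that assms by (auto simp: phi_def)
  ultimately have "F n b a c (w @ w) q = q" if "q < n" for q
    using T that by (simp add: F_append)
  then show ?thesis unfolding kern_def w_def[symmetric]
    by (intro exI[of _ "w @ w"]) (simp add: F_append)
qed


lemma kern_c0_4even:
  assumes "dl a b c" "even n" "n \<ge> 6"
  shows "kern 4 n a b c (cyc3 4 3)"
proof -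
  have ab: "b \<noteq> a" using assms by (auto simp: dl_def)
  have odd: "odd (n - 3)" using assms by simp
  define h where "h q = sw ((sw ((q + 1) mod 4) + 1) mod 4)" for q
  have hF: "F 4 a b c (a # replicate 3 b @ a # replicate (n - 3) b) q = h q" for q
    using ab odd by (simp add: F_Cons F_append F_rep_b h_def)
  have k0: "kern 4 n a b c (\<lambda>q. h (h q))"
    using kern_W[OF assms, of 4] unfolding hF by simp
  define g0 where "g0 q = h (h q)" for q
  define g1 where "g1 q = (g0 ((q + 1) mod 4) + 7) mod 4" for q
  define g2 where "g2 q = (g1 ((q + 1) mod 4) + 7) mod 4" for q
  have k1: "kern 4 n a b c g1"
    using kern_conjA[OF assms(1) _ _ k0[folded g0_def]] assms by (simp add: g1_def[abs_def])
  have k2: "kern 4 n a b c g2"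
    using kern_conjA[OF assms(1) _ _ k1] assms by (simp add: g2_def[abs_def])
  have k3: "kern 4 n a b c (\<lambda>q. g2 (g2 q))"
    using kern_comp[OF _ k2 k2] by simp
  show ?thesis using k3
  proof (rule kern_cong)
    fix q :: nat assume "q < 4"
    then have "q = 0 \<or> q = 1 \<or> q = 2 \<or> q = 3" by auto
    then show "g2 (g2 q) = cyc3 4 3 q"
      by (elim disjE) (simp_all add: g2_def g1_def g0_def h_def sw_def cyc3_def sc1_def)
  qed
qed


lemma rho2_pow: "(q::nat) < m \<Longrightarrow> ((\<lambda>q. (q + 2) mod m) ^^ j) q = (q + 2 * j) mod m"
proof (induction j)
  case (Suc j)
  have "((\<lambda>q. (q + 2) mod m) ^^ Suc j) q = ((q + 2 * j) mod m + 2) mod m" using Suc by simp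
  also have "\<dots> = (q + 2 * j + 2) mod m" by (rule mod_add_left_eq)
  also have "q + 2 * j + 2 = q + 2 * Suc j" by simp
  finally show ?case .
qed simp

lemma M2: "(x::nat) < m \<Longrightarrow> 2 \<le> m \<Longrightarrow> (x + 2 * (m - 1)) mod m = (if 2 \<le> x then x - 2 else x + m - 2)"
proof -
  assume x: "x < m" and m: "2 \<le> m"
  have "x + 2 * (m - 1) = (x + (m - 2)) + m" using m by simp
  then have "(x + 2 * (m - 1)) mod m = (x + (m - 2)) mod m" by (metis mod_add_self2)
  also have "\<dots> = (if 2 \<le> x then x - 2 else x + m - 2)"
  proof (cases "2 \<le> x")
    case True
    then have "x + (m - 2) = (x - 2) + m" using m by simp
    then have "(x + (m - 2)) mod m = (x - 2) mod m" by (metis mod_add_self2)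
    then show ?thesis using True x by simp
  qed (use x m in simp)
  finally show ?thesis .
qed

definition Eexp :: "nat \<Rightarrow> nat \<Rightarrow> nat" where
  "Eexp m q = (if q = 0 then 1 else if q = 1 then 0 else if q = m - 2 then m - 1
     else if q = m - 1 then m - 2 else q)"
definition Xexp :: "nat \<Rightarrow> nat \<Rightarrow> nat" where
  "Xexp m q = (if q = m - 1 then 0 else if q = 0 then m - 1 else if q = m - 3 then m - 2
     else if q = m - 2 then m - 3 else q)"
definition Yexp :: "nat \<Rightarrow> nat \<Rightarrow> nat" where
  "Yexp m q = (if q = m - 1 then 1 else if q = 1 then m - 1 else if q = m - 3 then m - 2
     else if q = m - 2 then m - 3 else q)"

lemma kern_c0_5:
  assumes "dl a b c" "m \<ge> 5" "n \<ge> 2"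
  shows "kern m n a b c (cyc3 m (m - 1))"
proof -
  have m2: "m \<ge> 2" using assms by simp
  have r2: "kern m n a b c (\<lambda>q. (q + 2) mod m)" using kern_rho2[OF assms(1)] .
  have r: "kern m n a b c (\<lambda>q. (q + 2 * (m - 1)) mod m)"
    by (rule kern_cong[OF kern_pow[OF m2 r2, of "m - 1"] rho2_pow])
  have e1: "kern m n a b c (\<lambda>q. sw ((sw q + 2) mod m))"
    using kern_conjB[OF assms(1) m2 assms(3) r2] .
  have E0: "kern m n a b c (\<lambda>q. (sw ((sw q + 2) mod m) + 2 * (m - 1)) mod m)"
    using kern_comp[OF m2 e1 r] .
  have E: "kern m n a b c (Eexp m)"
    using E0
  proof (rule kern_cong)
    fix q assume q: "q < m"
    have M: "(x + 2 * (m - 1)) mod m = (if 2 \<le> x then x - 2 else x + m - 2)" if "x < m" for x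
      using M2[OF that m2] .
    consider "q = 0" | "q = 1" | "q = m - 2" | "q = m - 1" | "2 \<le> q \<and> q + 3 \<le> m"
      using q assms by linarith
    then show "(sw ((sw q + 2) mod m) + 2 * (m - 1)) mod m = Eexp m q"
    proof cases
      case 1
      then have "sw ((sw q + 2) mod m) = 3" using assms by (simp add: sw_def)
      then show ?thesis using M[of 3] 1 assms by (simp add: Eexp_def, (arith)?)
    next
      case 2
      then have "sw ((sw q + 2) mod m) = 2" using assms by (simp add: sw_def)
      then show ?thesis using M[of 2] 2 assms by (simp add: Eexp_def, (arith)?)
    next
      case 3
      then have "sw q + 2 = m" using assms by (simp add: sw_def, arith)
      then have "sw ((sw q + 2) mod m) = 1" by (simp add: sw_def)
      then show ?thesis using M[of 1] 3 assms by (simp add: Eexp_def, (arith)?)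
    next
      case 4
      then have "sw q + 2 = 1 + m" using assms by (simp add: sw_def)
      then have "(sw q + 2) mod m = 1" using assms by (simp add: mod_Suc)
      then have "sw ((sw q + 2) mod m) = 0" by (simp add: sw_def)
      then show ?thesis using M[of 0] 4 assms by (simp add: Eexp_def, (arith)?)
    next
      case 5
      then have "sw ((sw q + 2) mod m) = q + 2" using assms by (simp add: sw_def)
      then show ?thesis using M[of "q + 2"] 5 assms by (simp add: Eexp_def, arith)
    qed
  qed
  have X0: "kern m n a b c (\<lambda>q. (Eexp m ((q + 1) mod m) + (2 * m - 1)) mod m)"
    using kern_conjA[OF assms(1) m2 assms(3) E] .
  have X: "kern m n a b c (Xexp m)"
    using X0
  proof (rule kern_cong)
    fix q assume q: "q < m"
    have P: "(x + (2 * m - 1)) mod m = (if x = 0 then m - 1 else x - 1)" if "x < m" for x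
      using pr_mod[OF that] .
    consider "q = m - 1" | "q = 0" | "q = m - 3" | "q = m - 2" | "1 \<le> q \<and> q + 4 \<le> m"
      using q assms by linarith
    then show "(Eexp m ((q + 1) mod m) + (2 * m - 1)) mod m = Xexp m q"
    proof cases
      case 1
      then have "Eexp m ((q + 1) mod m) = 1" using assms by (simp add: Eexp_def, (arith)?)
      then show ?thesis using P[of 1] 1 assms by (simp add: Xexp_def, (arith)?)
    next
      case 2
      then have "Eexp m ((q + 1) mod m) = 0" using assms by (simp add: Eexp_def, (arith)?)
      then show ?thesis using P[of 0] 2 assms by (simp add: Xexp_def, (arith)?)
    next
      case 3
      then have "(q + 1) mod m = m - 2" using assms by simp
      then have "Eexp m ((q + 1) mod m) = m - 1" using assms by (simp add: Eexp_def, (arith)?)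
      then show ?thesis using P[of "m - 1"] 3 assms by (simp add: Xexp_def, (arith)?)
    next
      case 4
      then have "(q + 1) mod m = m - 1" using assms by simp
      then have "Eexp m ((q + 1) mod m) = m - 2" using assms by (simp add: Eexp_def, (arith)?)
      then show ?thesis using P[of "m - 2"] 4 assms by (simp add: Xexp_def, (arith)?)
    next
      case 5
      then have "(q + 1) mod m = q + 1" using assms by simp
      then have "Eexp m ((q + 1) mod m) = q + 1" using 5 assms by (simp add: Eexp_def, (arith)?)
      then show ?thesis using P[of "q + 1"] 5 assms by (simp add: Xexp_def, (arith)?)
    qed
  qed
  have Y0: "kern m n a b c (\<lambda>q. sw (Xexp m (sw q)))"
    using kern_conjB[OF assms(1) m2 assms(3) X] .
  have Y: "kern m n a b c (Yexp m)"
    using Y0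
  proof (rule kern_cong)
    fix q assume q: "q < m"
    consider "q = 0" | "q = 1" | "q = m - 1" | "q = m - 3" | "q = m - 2" | "2 \<le> q \<and> q + 4 \<le> m"
      using q assms by linarith
    then show "sw (Xexp m (sw q)) = Yexp m q"
      by cases (use assms in \<open>simp add: sw_def Xexp_def Yexp_def, (arith)?\<close>)+
  qed
  have C: "kern m n a b c (\<lambda>q. Xexp m (Yexp m q))"
    using kern_comp[OF m2 Y X] .
  show ?thesis
    using C
  proof (rule kern_cong)
    fix q assume q: "q < m"
    consider "q = 0" | "q = 1" | "q = m - 1" | "q = m - 3" | "q = m - 2" | "2 \<le> q \<and> q + 4 \<le> m"
      using q assms by linarith
    then show "Xexp m (Yexp m q) = cyc3 m (m - 1) q"
      by cases (use assms in \<open>simp add: cyc3_def sc1_eq Xexp_def Yexp_def, (arith)?\<close>)+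
  qed
qed

lemma kern_c0:
  assumes "dl a b c" "m \<ge> 3" "n \<ge> 3" "(m, n) \<noteq> (4, 4)"
  shows "kern m n a b c (cyc3 m (m - 1))"
proof -
  consider "m = 3" | "m = 4" | "m \<ge> 5" using assms by linarith
  then show ?thesis
  proof cases
    case 1 then show ?thesis using kern_c0_3[OF assms(1)] by simp
  next
    case 2
    show ?thesis
    proof (cases "odd n")
      case True then show ?thesis using kern_c0_4odd[OF assms(1) True assms(3)] 2 by simp
    next
      case False
      have "n \<noteq> 4" using assms 2 by simp
      then have "n \<ge> 6" using assms False by presburger
      then show ?thesis using kern_c0_4even[OF assms(1)] False 2 by simp
    qed
  next
    case 3 then show ?thesis using kern_c0_5[OF assms(1) 3] assms by simp
  qed
qed

lemma kern_cyc:
  assumes "dl a b c" "m \<ge> 3" "n \<ge> 3" "(m, n) \<noteq> (4, 4)" "i < m"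
  shows "kern m n a b c (cyc3 m i)"
  using kern_cyc_all[OF assms(1,2) _ kern_c0[OF assms(1-4)] assms(5)] assms by simp


definition pre :: "(nat \<Rightarrow> nat) \<Rightarrow> nat set \<Rightarrow> nat \<Rightarrow> nat set" where
  "pre \<sigma> S k = {q. q < k \<and> \<sigma> q \<in> S}"

definition tr :: "nat \<Rightarrow> nat \<Rightarrow> nat \<Rightarrow> nat" where
  "tr x y q = (if q = x then y else if q = y then x else q)"

lemma pre_sub: "pre \<sigma> S k \<subseteq> {..<k}" by (auto simp: pre_def)

lemma adj_swap:
  assumes k: "k \<ge> 3"
    and H: "\<And>i S. i < k \<Longrightarrow> S \<subseteq> {..<k} \<Longrightarrow> P S \<Longrightarrow> P (pre (cyc3 k i) S k)"
    and p: "p + 1 < k" and S: "S \<subseteq> {..<k}" and PS: "P S"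
  shows "P (pre (tr p (p + 1)) S k)"
proof -
  define i where "i = (if p = 0 then k - 1 else p - 1)"
  have i: "i < k" "sc1 k i = p" "sc1 k (sc1 k i) = p + 1" "i \<noteq> p" "i \<noteq> p + 1"
    using k p by (auto simp: i_def sc1_eq)
  define S1 where "S1 = pre (cyc3 k i) S k"
  define S2 where "S2 = pre (cyc3 k i) S1 k"
  have P1: "P S1" using H[OF i(1) S PS] by (simp add: S1_def)
  have P2: "P S2" using H[OF i(1) _ P1] pre_sub by (simp add: S2_def S1_def)
  have c: "cyc3 k i q = (if q = i then p + 1 else if q = p then i else if q = p + 1 then p else q)" for q
    using i by (simp add: cyc3_def)
  have m1: "q \<in> S1 \<longleftrightarrow> q < k \<and> (if q = i then p + 1 else if q = p then i else if q = p + 1 then p else q) \<in> S" for q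
    by (simp add: S1_def pre_def c)
  have m2: "q \<in> S2 \<longleftrightarrow> q < k \<and> (if q = i then p + 1 else if q = p then i else if q = p + 1 then p else q) \<in> S1" for q
    by (simp add: S2_def pre_def c)
  have mt: "q \<in> pre (tr p (p + 1)) S k \<longleftrightarrow> q < k \<and> (if q = p then p + 1 else if q = p + 1 then p else q) \<in> S" for q
    by (simp add: pre_def tr_def)
  consider "(p \<in> S) = (p + 1 \<in> S)" | "(i \<in> S) = (p + 1 \<in> S)" | "(i \<in> S) = (p \<in> S)" by blast
  then show ?thesis
  proof cases
    case 1
    have "pre (tr p (p + 1)) S k = S"
      apply (rule set_eqI) unfolding mt using 1 S p by auto
    then show ?thesis using PS by simp
  next
    case 2
    have "pre (tr p (p + 1)) S k = S1"
      apply (rule set_eqI) unfolding mt m1 using 2 S p i by auto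
    then show ?thesis using P1 by simp
  next
    case 3
    have "pre (tr p (p + 1)) S k = S2"
      apply (rule set_eqI) unfolding mt m2 m1 using 3 S p i by auto
    then show ?thesis using P2 by simp
  qed
qed

lemma any_swap:
  assumes A: "\<And>p S. p + 1 < k \<Longrightarrow> S \<subseteq> {..<k} \<Longrightarrow> P S \<Longrightarrow> P (pre (tr p (p + 1)) S k)"
  shows "x < y \<Longrightarrow> y < k \<Longrightarrow> S \<subseteq> {..<k} \<Longrightarrow> P S \<Longrightarrow> P (pre (tr x y) S k)"
proof (induction y arbitrary: S)
  case 0 then show ?case by simp
next
  case (Suc y)
  show ?case
  proof (cases "x = y")
    case True then show ?thesis using A Suc.prems by simp
  next
    case False
    then have xy: "x < y" using Suc.prems by simp
    define S1 where "S1 = pre (tr y (y + 1)) S k"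
    have 1: "P S1" using A[of y S] Suc.prems by (simp add: S1_def)
    define S2 where "S2 = pre (tr x y) S1 k"
    have 2: "P S2" using Suc.IH[OF xy _ _ 1] Suc.prems pre_sub by (simp add: S2_def S1_def)
    have 3: "P (pre (tr y (y + 1)) S2 k)" using A[of y S2] 2 Suc.prems pre_sub by (simp add: S2_def)
    have "pre (tr y (y + 1)) S2 k = pre (tr x (Suc y)) S k"
      using xy Suc.prems by (auto simp: S2_def S1_def pre_def tr_def)
    then show ?thesis using 3 by simp
  qed
qed

lemma card_trans:
  assumes k: "k \<ge> 3"
    and H: "\<And>i S. i < k \<Longrightarrow> S \<subseteq> {..<k} \<Longrightarrow> P S \<Longrightarrow> P (pre (cyc3 k i) S k)"
  shows "S \<subseteq> {..<k} \<Longrightarrow> S' \<subseteq> {..<k} \<Longrightarrow> card S = card S' \<Longrightarrow> P S \<Longrightarrow> P S'"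
proof (induction "card (S - S')" arbitrary: S)
  case 0
  have fin: "finite S" "finite S'" using 0 finite_subset[OF _ finite_lessThan] by auto
  have "S \<subseteq> S'" using 0 fin by auto
  then have "S = S'" using 0 fin by (metis card_subset_eq)
  then show ?case using 0 by simp
next
  case (Suc d)
  have fin: "finite S" "finite S'" using Suc.prems finite_subset[OF _ finite_lessThan] by auto
  obtain x where x: "x \<in> S" "x \<notin> S'" using Suc.hyps(2) by (metis Diff_iff card.empty ex_in_conv nat.simps(3))
  have "S' - S \<noteq> {}"
  proof
    assume "S' - S = {}"
    then have "S' \<subseteq> S" by auto
    then have "S' = S" using fin Suc.prems(3) by (metis card_subset_eq)
    then show False using x by simp
  qed
  then obtain y where y: "y \<in> S'" "y \<notin> S" by auto
  have xy: "x \<noteq> y" using x y by auto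
  have xk: "x < k" "y < k" using x y Suc.prems by auto
  have sw: "\<And>p S. p + 1 < k \<Longrightarrow> S \<subseteq> {..<k} \<Longrightarrow> P S \<Longrightarrow> P (pre (tr p (p + 1)) S k)"
    using adj_swap[of k P, OF k H] by blast
  have trs: "tr x y = tr y x" by (auto simp: tr_def)
  define S1 where "S1 = pre (tr x y) S k"
  have P1: "P S1"
  proof (cases "x < y")
    case True then show ?thesis using any_swap[of k P, OF sw True] xk Suc.prems by (simp add: S1_def)
  next
    case False then have "y < x" using xy by simp
    then show ?thesis using any_swap[of k P, OF sw, of y x] xk Suc.prems by (simp add: S1_def trs)
  qed
  have S1e: "S1 = insert y (S - {x})" using x y xk Suc.prems(1) by (auto simp: S1_def pre_def tr_def)
  have "card S > 0" using fin x card_gt_0_iff by blast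
  then have "card S1 = card S" using S1e fin x y by (simp add: card_insert_if)
  moreover have "S1 - S' = (S - S') - {x}" using S1e x y by auto
  then have "card (S1 - S') = d" using Suc.hyps(2) x fin by simp
  moreover have "S1 \<subseteq> {..<k}" by (simp add: S1_def pre_sub)
  ultimately show ?case using Suc.hyps(1)[of S1] P1 Suc.prems by simp
qed


lemma dl_sym: "dl a b c \<Longrightarrow> dl b a c" by (auto simp: dl_def)

lemma Rset_sub: "(S, T) \<in> Rset m n a b c \<Longrightarrow> S \<subseteq> {..<m} \<and> T \<subseteq> {..<n}"
  unfolding Rset_def Sset_def by blast

lemma Sset_Nil: "k \<ge> 1 \<Longrightarrow> Sset k a b c [] = {k - 1}"
  by (auto simp: Sset_def)

lemma Rset_start: "m \<ge> 1 \<Longrightarrow> n \<ge> 1 \<Longrightarrow> ({m - 1}, {n - 1}) \<in> Rset m n a b c"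
proof -
  assume "m \<ge> 1" "n \<ge> 1"
  moreover have "(Sset m a b c [], Sset n b a c []) \<in> Rset m n a b c" by (simp add: Rset_def)
  ultimately show ?thesis using Sset_Nil[of m] Sset_Nil[of n] by simp
qed

lemma Rset_act:
  assumes "m \<ge> 2" "n \<ge> 2" "(S, T) \<in> Rset m n a b c"
  shows "(pre (F m a b c v) S m, pre (F n b a c v) T n) \<in> Rset m n a b c"
proof -
  obtain u where u: "S = Sset m a b c u" "T = Sset n b a c u" using assms(3) by (auto simp: Rset_def)
  have eq: "Sset k a' b' c' (u @ rev v) = pre (F k a' b' c' v) (Sset k a' b' c' u) k" if "k \<ge> 2" for k a' b' c'
  proof (rule set_eqI)
    fix q
    have "q < k \<Longrightarrow> F k a' b' c' v q < k" using F_lt[OF that] by blast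
    then show "q \<in> Sset k a' b' c' (u @ rev v) \<longleftrightarrow> q \<in> pre (F k a' b' c' v) (Sset k a' b' c' u) k"
      unfolding Sset_def pre_def by (auto simp: F_append)
  qed
  have "(Sset m a b c (u @ rev v), Sset n b a c (u @ rev v)) \<in> Rset m n a b c"
    unfolding Rset_def by (rule rangeI)
  then show ?thesis using eq[of m a b c] eq[of n b a c] assms u by simp
qed

lemma kern_actS:
  assumes "m \<ge> 2" "n \<ge> 2" "kern m n a b c \<sigma>" "(S, T) \<in> Rset m n a b c"
  shows "(pre \<sigma> S m, T) \<in> Rset m n a b c"
proof -
  obtain v where v: "\<forall>q<n. F n b a c v q = q" "\<forall>q<m. F m a b c v q = \<sigma> q"
    using assms(3) unfolding kern_def by blast
  have "pre (F m a b c v) S m = pre \<sigma> S m" using v by (auto simp: pre_def)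
  moreover have "pre (F n b a c v) T n = T" using v Rset_sub[OF assms(4)] by (auto simp: pre_def)
  ultimately show ?thesis using Rset_act[OF assms(1,2,4), of v] by simp
qed

lemma kern_actT:
  assumes "m \<ge> 2" "n \<ge> 2" "kern n m b a c \<tau>" "(S, T) \<in> Rset m n a b c"
  shows "(S, pre \<tau> T n) \<in> Rset m n a b c"
proof -
  obtain v where v: "\<forall>q<m. F m a b c v q = q" "\<forall>q<n. F n b a c v q = \<tau> q"
    using assms(3) unfolding kern_def by blast
  have "pre (F n b a c v) T n = pre \<tau> T n" using v by (auto simp: pre_def)
  moreover have "pre (F m a b c v) S m = S" using v Rset_sub[OF assms(4)] by (auto simp: pre_def)
  ultimately show ?thesis using Rset_act[OF assms(1,2,4), of v] by simp
qed

locale ctx =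
  fixes m n :: nat and a b c :: letter
  assumes dl: "dl a b c" and m3: "m \<ge> 3" and n3: "n \<ge> 3" and not44: "(m, n) \<noteq> (4, 4)"
begin

lemma transS:
  assumes "(S, T) \<in> Rset m n a b c" "S' \<subseteq> {..<m}" "card S' = card S"
  shows "(S', T) \<in> Rset m n a b c"
proof -
  have H: "\<And>i X. i < m \<Longrightarrow> X \<subseteq> {..<m} \<Longrightarrow> (X, T) \<in> Rset m n a b c \<Longrightarrow> (pre (cyc3 m i) X m, T) \<in> Rset m n a b c"
    by (rule kern_actS[OF _ _ kern_cyc[OF dl m3 n3 not44]]) (use m3 n3 in auto)
  show ?thesis
    by (rule card_trans[of m "\<lambda>X. (X, T) \<in> Rset m n a b c", OF m3 H, of S S'])
       (use assms Rset_sub[OF assms(1)] in auto)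
qed

lemma transT:
  assumes "(S, T) \<in> Rset m n a b c" "T' \<subseteq> {..<n}" "card T' = card T"
  shows "(S, T') \<in> Rset m n a b c"
proof -
  have nm: "(n, m) \<noteq> (4, 4)" using not44 by auto
  have H: "\<And>i X. i < n \<Longrightarrow> X \<subseteq> {..<n} \<Longrightarrow> (S, X) \<in> Rset m n a b c \<Longrightarrow> (S, pre (cyc3 n i) X n) \<in> Rset m n a b c"
    by (rule kern_actT[OF _ _ kern_cyc[OF dl_sym[OF dl] n3 m3 nm]]) (use m3 n3 in auto)
  show ?thesis
    by (rule card_trans[of n "\<lambda>X. (S, X) \<in> Rset m n a b c", OF n3 H, of T T'])
       (use assms Rset_sub[OF assms(1)] in auto)
qed

end


definition cpre :: "nat \<Rightarrow> nat set \<Rightarrow> nat set" where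
  "cpre k S = pre (\<lambda>q. if q = k - 1 then 0 else q) S k"

lemma crep:
  assumes k: "k \<ge> 3" and j: "j \<le> k"
    and j': "j' = j \<or> (1 \<le> j \<and> j \<le> k - 1 \<and> (j' = j + 1 \<or> j' = j - 1))"
  shows "\<exists>S. S \<subseteq> {..<k} \<and> card S = j \<and> card (cpre k S) = j'"
proof -
  consider "j' = j + 1" "1 \<le> j" "j \<le> k - 1" | "j' = j - 1" "1 \<le> j" "j \<le> k - 1"
    | "j' = j" "j \<le> k - 2" | "j' = j" "j = k - 1" | "j' = j" "j = k" using j j' by linarith
  then show ?thesis
  proof cases
    case 1
    have "cpre k {..<j} = insert (k - 1) {..<j}" using 1 k by (auto simp: cpre_def pre_def)
    then show ?thesis using 1 by (intro exI[of _ "{..<j}"]) auto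
  next
    case 2
    have "cpre k {k - j..<k} = {k - j..<k - 1}" using 2 k by (auto simp: cpre_def pre_def)
    then show ?thesis using 2 by (intro exI[of _ "{k - j..<k}"]) auto
  next
    case 3
    have "cpre k {1..<j + 1} = {1..<j + 1}" using 3 k by (auto simp: cpre_def pre_def)
    then show ?thesis using 3 by (intro exI[of _ "{1..<j + 1}"]) auto
  next
    case 4
    have "cpre k ({..<k} - {1}) = {..<k} - {1}" using 4 k by (auto simp: cpre_def pre_def)
    moreover have "card ({..<k} - {1}) = k - 1" using k by simp
    ultimately show ?thesis using 4 by (intro exI[of _ "{..<k} - {1}"]) auto
  next
    case 5
    have "cpre k {..<k} = {..<k}" using 5 k by (auto simp: cpre_def pre_def)
    then show ?thesis using 5 by (intro exI[of _ "{..<k}"]) auto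
  qed
qed

lemma Rset_c:
  assumes "dl a b c" "m \<ge> 2" "n \<ge> 2" "(S, T) \<in> Rset m n a b c"
  shows "(cpre m S, cpre n T) \<in> Rset m n a b c"
proof -
  have d: "c \<noteq> a" "c \<noteq> b" using assms(1) by (auto simp: dl_def)
  have "pre (F m a b c [c]) S m = cpre m S" "pre (F n b a c [c]) T n = cpre n T"
    using d by (simp_all add: cpre_def pre_def F_Cons)
  then show ?thesis using Rset_act[OF assms(2,3,4), of "[c]"] by simp
qed

lemma point_reach:
  assumes "m \<ge> 3" "\<And>i. i < m \<Longrightarrow> kern m n a b c (cyc3 m i)" "p < m"
  shows "\<exists>v. (\<forall>q<n. F n b a c v q = q) \<and> F m a b c v 0 = p"
proof -
  have "d < m \<Longrightarrow> \<exists>v. (\<forall>q<n. F n b a c v q = q) \<and> F m a b c v 0 = m - 1 - d" for d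
  proof (induction d)
    case 0
    obtain w where w: "\<forall>q<n. F n b a c w q = q" "\<forall>q<m. F m a b c w q = cyc3 m (m - 1) q"
      using assms(2)[of "m - 1"] assms(1) unfolding kern_def by auto
    have "cyc3 m (m - 1) 0 = m - 1" using assms(1) by (simp add: cyc3_def sc1_eq)
    then show ?case using w assms(1) by (intro exI[of _ w]) simp
  next
    case (Suc d)
    then obtain v where v: "\<forall>q<n. F n b a c v q = q" "F m a b c v 0 = m - 1 - d" by auto
    define p where "p = m - 1 - Suc d"
    have p: "p < m" "sc1 m p = m - 1 - d" using Suc.prems by (auto simp: p_def sc1_eq)
    obtain w where w: "\<forall>q<n. F n b a c w q = q" "\<forall>q<m. F m a b c w q = cyc3 m p q"
      using assms(2)[OF p(1)] unfolding kern_def by auto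
    have "sc1 m p \<noteq> p" using p Suc.prems by (simp add: p_def)
    then have "cyc3 m p (m - 1 - d) = p" using p by (simp add: cyc3_def)
    moreover have "m - 1 - d < m" using Suc.prems by simp
    ultimately have "F m a b c (v @ w) 0 = p" using v w by (simp add: F_append)
    moreover have "\<forall>q<n. F n b a c (v @ w) q = q" using v w by (simp add: F_append)
    ultimately show ?case unfolding p_def by blast
  qed
  from this[of "m - 1 - p"] show ?thesis using assms by simp
qed

context ctx
begin

lemma m2: "m \<ge> 2" and n2: "n \<ge> 2" using m3 n3 by auto

definition good :: "nat \<Rightarrow> nat \<Rightarrow> bool" where
  "good j l \<longleftrightarrow> (\<forall>S T. S \<subseteq> {..<m} \<longrightarrow> T \<subseteq> {..<n} \<longrightarrow> card S = j \<longrightarrow> card T = l \<longrightarrow> (S, T) \<in> Rset m n a b c)"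

lemma good_of: "(S, T) \<in> Rset m n a b c \<Longrightarrow> good (card S) (card T)"
  unfolding good_def using transS transT by metis

lemma good_step:
  assumes g: "good j l" and j: "j \<le> m" and l: "l \<le> n"
    and j': "j' = j \<or> (1 \<le> j \<and> j \<le> m - 1 \<and> (j' = j + 1 \<or> j' = j - 1))"
    and l': "l' = l \<or> (1 \<le> l \<and> l \<le> n - 1 \<and> (l' = l + 1 \<or> l' = l - 1))"
  shows "good j' l'"
proof -
  obtain S where S: "S \<subseteq> {..<m}" "card S = j" "card (cpre m S) = j'" using crep[OF m3 j j'] by blast
  obtain T where T: "T \<subseteq> {..<n}" "card T = l" "card (cpre n T) = l'" using crep[OF n3 l l'] by blast
  have "(S, T) \<in> Rset m n a b c" using g S T unfolding good_def by blast
  then have "(cpre m S, cpre n T) \<in> Rset m n a b c" using Rset_c[OF dl m2 n2] by blast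
  then show ?thesis using good_of S T by metis
qed

lemma good_all: "j \<le> m \<Longrightarrow> l \<le> n \<Longrightarrow> good j l"
proof -
  have g11: "good 1 1" using good_of[OF Rset_start[of m n a b c]] m3 n3 by simp
  have gl: "good 1 l" if "l \<le> n" for l
  proof (cases "l = 0")
    case True then show ?thesis using good_step[OF g11, of 1 0] m3 n3 by simp
  next
    case False
    have "1 \<le> l' \<Longrightarrow> l' \<le> n \<Longrightarrow> good 1 l'" for l'
    proof (induction l' rule: nat_induct_at_least)
      case base show ?case by (rule g11)
    next
      case (Suc l') then show ?case using good_step[of 1 l' 1 "l' + 1"] m3 by simp
    qed
    then show ?thesis using that False by simp
  qed
  fix j l assume j: "j \<le> m" and l: "l \<le> n"
  show "good j l"
  proof (cases "j = 0")
    case True then show ?thesis using good_step[OF gl[OF l], of 0 l] m3 l by simp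
  next
    case False
    have "1 \<le> j' \<Longrightarrow> j' \<le> m \<Longrightarrow> good j' l" for j'
    proof (induction j' rule: nat_induct_at_least)
      case base show ?case by (rule gl[OF l])
    next
      case (Suc j') then show ?case using good_step[of j' l "j' + 1" l] l by simp
    qed
    then show ?thesis using j False by simp
  qed
qed

lemma Rset_full: "Rset m n a b c = {(S, T). S \<subseteq> {..<m} \<and> T \<subseteq> {..<n}}"
proof (intro set_eqI iffI)
  fix x assume "x \<in> Rset m n a b c"
  then show "x \<in> {(S, T). S \<subseteq> {..<m} \<and> T \<subseteq> {..<n}}" using Rset_sub by (cases x) auto
next
  fix x assume x: "x \<in> {(S, T). S \<subseteq> {..<m} \<and> T \<subseteq> {..<n}}"
  obtain S T where st: "x = (S, T)" "S \<subseteq> {..<m}" "T \<subseteq> {..<n}" using x by auto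
  have "card S \<le> m" "card T \<le> n" using st card_mono[OF finite_lessThan] by fastforce+
  then show "x \<in> Rset m n a b c" using good_all st unfolding good_def by blast
qed

lemma Jfull: "Jfull m n a b c"
  unfolding Jfull_def
proof (intro allI impI)
  fix p q assume p: "p < m" and q: "q < n"
  have nm: "(n, m) \<noteq> (4, 4)" using not44 by auto
  obtain v1 where v1: "\<forall>x<n. F n b a c v1 x = x" "F m a b c v1 0 = p"
    using point_reach[OF m3 kern_cyc[OF dl m3 n3 not44] p] by blast
  obtain v2 where v2: "\<forall>x<m. F m a b c v2 x = x" "F n b a c v2 0 = q"
    using point_reach[OF n3 kern_cyc[OF dl_sym[OF dl] n3 m3 nm] q] by blast
  show "\<exists>w. F m a b c w 0 = p \<and> F n b a c w 0 = q"
    using v1 v2 p n3 by (intro exI[of _ "v1 @ v2"]) (simp add: F_append)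
qed

end


definition AllP :: "nat \<Rightarrow> nat \<Rightarrow> (nat set \<times> nat set) set" where
  "AllP m n = {(S, T). S \<subseteq> {..<m} \<and> T \<subseteq> {..<n}}"

lemma AllP_eq: "AllP m n = Pow {..<m} \<times> Pow {..<n}" by (auto simp: AllP_def)

lemma rect_count:
  assumes "finite M" "finite N"
  shows "card ((\<lambda>(A, B). A \<times> B) ` (Pow M \<times> Pow N)) = (2 ^ card M - 1) * (2 ^ card N - 1) + 1"
proof -
  define P where "P = Pow M - {{}}"
  define Q where "Q = Pow N - {{}}"
  have e: "(\<lambda>(A, B). A \<times> B) ` (Pow M \<times> Pow N) = insert {} ((\<lambda>(A, B). A \<times> B) ` (P \<times> Q))"
    unfolding P_def Q_def by (auto simp: image_iff)
  have ni: "{} \<notin> (\<lambda>(A, B). A \<times> B) ` (P \<times> Q)" by (auto simp: P_def Q_def)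
  have inj: "inj_on (\<lambda>(A, B). A \<times> B) (P \<times> Q)"
    by (rule inj_onI) (auto simp: P_def Q_def times_eq_iff)
  have fin: "finite (P \<times> Q)" using assms by (simp add: P_def Q_def)
  have "card P = 2 ^ card M - 1" using assms by (simp add: P_def card_Diff_singleton card_Pow)
  moreover have "card Q = 2 ^ card N - 1" using assms by (simp add: Q_def card_Diff_singleton card_Pow)
  ultimately show ?thesis
    unfolding e using ni inj fin by (simp add: card_image card_cartesian_product)
qed

lemma count_inter:
  "card (Hrel m n (\<and>) ` AllP m n) = (2 ^ m - 1) * (2 ^ n - 1) + 1"
proof -
  have "Hrel m n (\<and>) ` AllP m n = (\<lambda>(A, B). A \<times> B) ` (Pow {..<m} \<times> Pow {..<n})"
    unfolding AllP_eq by (rule image_cong) (auto simp: Hrel_def)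
  then show ?thesis using rect_count[of "{..<m}" "{..<n}"] by simp
qed

lemma count_diff:
  "card (Hrel m n (\<lambda>x y. x \<and> \<not> y) ` AllP m n) = (2 ^ m - 1) * (2 ^ n - 1) + 1"
proof -
  have "Hrel m n (\<lambda>x y. x \<and> \<not> y) ` AllP m n = (\<lambda>(A, B). A \<times> B) ` (\<lambda>(S, T). (S, {..<n} - T)) ` (Pow {..<m} \<times> Pow {..<n})"
    unfolding AllP_eq image_image by (rule image_cong) (auto simp: Hrel_def)
  also have "(\<lambda>(S, T). (S, {..<n} - T)) ` (Pow {..<m} \<times> Pow {..<n}) = Pow {..<m} \<times> Pow {..<n}"
  proof (intro set_eqI iffI)
    fix x assume "x \<in> Pow {..<m} \<times> Pow {..<n}"
    then show "x \<in> (\<lambda>(S, T). (S, {..<n} - T)) ` (Pow {..<m} \<times> Pow {..<n})"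
      by (cases x) (auto simp: image_iff intro!: bexI[of _ "(fst x, {..<n} - snd x)"])
  qed auto
  finally show ?thesis using rect_count[of "{..<m}" "{..<n}"] by simp
qed

lemma count_union:
  "card (Hrel m n (\<or>) ` AllP m n) = (2 ^ m - 1) * (2 ^ n - 1) + 1"
proof -
  define U where "U = {..<m} \<times> {..<n}"
  have "Hrel m n (\<or>) ` AllP m n = (\<lambda>X. U - X) ` (\<lambda>(A, B). A \<times> B) ` (\<lambda>(S, T). ({..<m} - S, {..<n} - T)) ` (Pow {..<m} \<times> Pow {..<n})"
    unfolding AllP_eq image_image U_def by (rule image_cong) (auto simp: Hrel_def)
  also have "(\<lambda>(S, T). ({..<m} - S, {..<n} - T)) ` (Pow {..<m} \<times> Pow {..<n}) = Pow {..<m} \<times> Pow {..<n}"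
  proof (intro set_eqI iffI)
    fix x assume "x \<in> Pow {..<m} \<times> Pow {..<n}"
    then show "x \<in> (\<lambda>(S, T). ({..<m} - S, {..<n} - T)) ` (Pow {..<m} \<times> Pow {..<n})"
      by (cases x) (auto simp: image_iff intro!: bexI[of _ "({..<m} - fst x, {..<n} - snd x)"])
  qed auto
  finally have e: "Hrel m n (\<or>) ` AllP m n = (\<lambda>X. U - X) ` (\<lambda>(A, B). A \<times> B) ` (Pow {..<m} \<times> Pow {..<n})" .
  have "inj_on (\<lambda>X. U - X) ((\<lambda>(A, B). A \<times> B) ` (Pow {..<m} \<times> Pow {..<n}))"
    by (rule inj_onI) (auto simp: U_def)
  then show ?thesis unfolding e using rect_count[of "{..<m}" "{..<n}"] by (simp add: card_image)
qed

lemma count_symdiff: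
  assumes "m \<ge> 1" "n \<ge> 1"
  shows "card (Hrel m n (\<noteq>) ` AllP m n) = 2 ^ (m + n - 1)"
proof -
  define X where "X = {(S, T). S \<subseteq> {..<m} \<and> 0 \<in> S \<and> T \<subseteq> {..<n}}"
  have e: "Hrel m n (\<noteq>) ` AllP m n = Hrel m n (\<noteq>) ` X"
  proof (intro set_eqI iffI)
    fix Z assume "Z \<in> Hrel m n (\<noteq>) ` AllP m n"
    then obtain S T where st: "S \<subseteq> {..<m}" "T \<subseteq> {..<n}" "Z = Hrel m n (\<noteq>) (S, T)"
      by (auto simp: AllP_def)
    show "Z \<in> Hrel m n (\<noteq>) ` X"
    proof (cases "0 \<in> S")
      case True then show ?thesis using st by (auto simp: X_def)
    next
      case False
      have "Z = Hrel m n (\<noteq>) ({..<m} - S, {..<n} - T)" using st by (auto simp: Hrel_def)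
      moreover have "({..<m} - S, {..<n} - T) \<in> X" using False assms by (auto simp: X_def)
      ultimately show ?thesis by blast
    qed
  next
    fix Z assume "Z \<in> Hrel m n (\<noteq>) ` X"
    moreover have "X \<subseteq> AllP m n" by (auto simp: X_def AllP_def)
    ultimately show "Z \<in> Hrel m n (\<noteq>) ` AllP m n" by blast
  qed
  have inj: "inj_on (Hrel m n (\<noteq>)) X"
  proof (rule inj_onI)
    fix x y assume x: "x \<in> X" and y: "y \<in> X" and eq: "Hrel m n (\<noteq>) x = Hrel m n (\<noteq>) y"
    obtain S T S' T' where xy: "x = (S, T)" "y = (S', T')" by (cases x, cases y) auto
    have mem: "((p \<in> S) \<noteq> (q \<in> T)) = ((p \<in> S') \<noteq> (q \<in> T'))" if pq: "p < m" "q < n" for p q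
    proof -
      have "(p, q) \<in> Hrel m n (\<noteq>) (S, T) \<longleftrightarrow> (p, q) \<in> Hrel m n (\<noteq>) (S', T')" using eq xy by simp
      then show ?thesis using pq by (simp add: Hrel_def)
    qed
    have TT: "T = T'"
    proof (rule set_eqI)
      fix q show "q \<in> T \<longleftrightarrow> q \<in> T'"
        using mem[of 0 q] x y assms unfolding xy X_def by auto
    qed
    have "S = S'"
    proof (rule set_eqI)
      fix p show "p \<in> S \<longleftrightarrow> p \<in> S'"
        using mem[of p 0] x y assms TT unfolding xy X_def by auto
    qed
    then show "x = y" using TT xy by simp
  qed
  have cX: "card X = 2 ^ (m - 1) * 2 ^ n"
  proof -
    define g where "g = (\<lambda>(A::nat set, T::nat set). (insert 0 A, T))"
    have "X = g ` (Pow {1..<m} \<times> Pow {..<n})"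
    proof (intro set_eqI iffI)
      fix z assume "z \<in> X"
      then obtain S T where z: "z = (S, T)" "S \<subseteq> {..<m}" "0 \<in> S" "T \<subseteq> {..<n}" by (auto simp: X_def)
      have 1: "(S - {0}, T) \<in> Pow {1..<m} \<times> Pow {..<n}" using z by auto
      have "g (S - {0}, T) = z" using z by (auto simp: g_def)
      then show "z \<in> g ` (Pow {1..<m} \<times> Pow {..<n})" using 1 by (metis rev_image_eqI)
    next
      fix z assume "z \<in> g ` (Pow {1..<m} \<times> Pow {..<n})"
      then obtain A T where z: "z = (insert 0 A, T)" "A \<subseteq> {1..<m}" "T \<subseteq> {..<n}" by (auto simp: g_def)
      then show "z \<in> X" using assms unfolding X_def by auto
    qed
    moreover have "inj_on g (Pow {1..<m} \<times> Pow {..<n})"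
    proof (rule inj_onI)
      fix x y assume x: "x \<in> Pow {1..<m} \<times> Pow {..<n}" and y: "y \<in> Pow {1..<m} \<times> Pow {..<n}" and e: "g x = g y"
      obtain A T A' T' where xy: "x = (A, T)" "y = (A', T')" by (cases x, cases y) auto
      have "0 \<notin> A" "0 \<notin> A'" using x y xy by auto
      moreover have "insert 0 A = insert 0 A'" "T = T'" using e xy by (simp_all add: g_def)
      ultimately have "A = A'" by (metis Diff_insert_absorb)
      then show "x = y" using xy \<open>T = T'\<close> by simp
    qed
    ultimately have "card X = card (Pow {1..<m} \<times> Pow {..<n})" by (simp add: card_image)
    then show ?thesis by (simp add: card_cartesian_product card_Pow)
  qed
  have "2 ^ (m - 1) * 2 ^ n = (2::nat) ^ (m + n - 1)" using assms by (simp add: power_add[symmetric])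
  then show ?thesis unfolding e using card_image[OF inj] cX by simp
qed


lemma dl_abc: "dl La Lb Lc" by (simp add: dl_def)

lemma general_case:
  fixes m n :: nat
  assumes "m \<ge> 3" "n \<ge> 3" "(m, n) \<noteq> (4, 4)"
  defines "K \<equiv> reversal (U m La Lb Lc)" and "L \<equiv> reversal (U n Lb La Lc)"
  shows "sc (K \<union> L) = (2^m - 1) * (2^n - 1) + 1 \<and>
       sc (K \<inter> L) = (2^m - 1) * (2^n - 1) + 1 \<and>
       sc (K - L) = (2^m - 1) * (2^n - 1) + 1 \<and>
       sc (symdiff K L) = 2^(m + n - 1)"
proof -
  interpret ctx m n La Lb Lc using assms dl_abc by unfold_locales auto
  have R: "Rset m n La Lb Lc = AllP m n" using Rset_full by (simp add: AllP_def)
  have m2: "m \<ge> 2" "n \<ge> 2" using assms by auto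
  have gen: "sc {w. op (w \<in> K) (w \<in> L)} = card (Hrel m n op ` AllP m n)" for op
    using sc_via_R[OF m2 Jfull, of op] R unfolding K_def L_def by simp
  have "K \<union> L = {w. (w \<in> K) \<or> (w \<in> L)}" "K \<inter> L = {w. (w \<in> K) \<and> (w \<in> L)}"
       "K - L = {w. (w \<in> K) \<and> \<not> (w \<in> L)}" "symdiff K L = {w. (w \<in> K) \<noteq> (w \<in> L)}"
    by (auto simp: symdiff_def)
  then show ?thesis
    using gen[of "(\<or>)"] gen[of "(\<and>)"] gen[of "\<lambda>x y. x \<and> \<not> y"] gen[of "(\<noteq>)"]
      count_union count_inter count_diff count_symdiff[of m n] assms
    by simp
qed


definition enc :: "nat set \<Rightarrow> bool list" where
  "enc S = map (\<lambda>i. i \<in> S) [0..<4]"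

definition stepL :: "letter \<Rightarrow> bool list \<times> bool list \<Rightarrow> bool list \<times> bool list" where
  "stepL x p = (map (\<lambda>q. fst p ! U_delta 4 La Lb Lc q x) [0..<4], map (\<lambda>q. snd p ! U_delta 4 Lb La Lc q x) [0..<4])"

definition runL :: "letter list \<Rightarrow> bool list \<times> bool list" where
  "runL u = foldl (\<lambda>p x. stepL x p) ([False, False, False, True], [False, False, False, True]) u"

definition bl4 :: "bool list list" where
  "bl4 = [[False, False, False, False], [False, False, False, True], [False, False, True, False], [False, False, True, True], [False, True, False, False], [False, True, False, True], [False, True, True, False], [False, True, True, True], [True, False, False, False], [True, False, False, True], [True, False, True, False], [True, False, True, True], [True, True, False, False], [True, True, False, True], [True, True, True, False], [True, True, True, True]]"

definition allL :: "(bool list \<times> bool list) list" where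
  "allL = List.product bl4 bl4"

definition missf :: "bool list \<times> bool list \<Rightarrow> bool" where
  "missf p = (if fst p ! 0 then (if fst p ! 1 then (if fst p ! 2 then False else (if fst p ! 3 then False else (if snd p ! 0 then (if snd p ! 1 then (if snd p ! 2 then False else (if snd p ! 3 then False else True)) else (if snd p ! 2 then False else (if snd p ! 3 then True else False))) else (if snd p ! 1 then (if snd p ! 2 then (if snd p ! 3 then False else True) else False) else (if snd p ! 2 then (if snd p ! 3 then True else False) else False))))) else (if fst p ! 2 then (if fst p ! 3 then False else (if snd p ! 0 then (if snd p ! 1 then False else (if snd p ! 2 then (if snd p ! 3 then False else True) else (if snd p ! 3 then True else False))) else (if snd p ! 1 then (if snd p ! 2 then (if snd p ! 3 then False else True) else (if snd p ! 3 then True else False)) else False))) else (if fst p ! 3 then (if snd p ! 0 then (if snd p ! 1 then (if snd p ! 2 then False else (if snd p ! 3 then False else True)) else (if snd p ! 2 then (if snd p ! 3 then False else True) else False)) else (if snd p ! 1 then (if snd p ! 2 then False else (if snd p ! 3 then True else False)) else (if snd p ! 2 then (if snd p ! 3 then True else False) else False))) else False))) else (if fst p ! 1 then (if fst p ! 2 then (if fst p ! 3 then False else (if snd p ! 0 then (if snd p ! 1 then (if snd p ! 2 then False else (if snd p ! 3 then False else True)) else (if snd p ! 2 then (if snd p ! 3 then False else True) else False)) else (if snd p ! 1 then (if snd p ! 2 then False else (if snd p ! 3 then True else False)) else (if snd p ! 2 then (if snd p ! 3 then True else False) else False)))) else (if fst p ! 3 then (if snd p ! 0 then (if snd p ! 1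 then False else (if snd p ! 2 then (if snd p ! 3 then False else True) else (if snd p ! 3 then True else False))) else (if snd p ! 1 then (if snd p ! 2 then (if snd p ! 3 then False else True) else (if snd p ! 3 then True else False)) else False)) else False)) else (if fst p ! 2 then (if fst p ! 3 then (if snd p ! 0 then (if snd p ! 1 then (if snd p ! 2 then False else (if snd p ! 3 then False else True)) else (if snd p ! 2 then False else (if snd p ! 3 then True else False))) else (if snd p ! 1 then (if snd p ! 2 then (if snd p ! 3 then False else True) else False) else (if snd p ! 2 then (if snd p ! 3 then True else False) else False))) else False) else False)))"

definition Wall :: "letter list list" where
  "Wall = [[Lc],
  [Lb, Lb, Lc, La, Lb],
  [Lb, Lc],
  [Lb, Lb, Lb, Lc, Lb],
  [Lb, Lb, Lc],
  [Lb, Lb, Lb, Lc, La],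
  [Lb, Lb, Lb, Lc, Lb, Lb],
  [Lb, Lb, Lb, Lc, La, Lb, Lc, La],
  [Lb, Lb, Lc, La],
  [Lb, Lb, Lb, Lc],
  [Lb, Lb, Lb, Lc, La, Lb],
  [Lb, Lb, Lb, Lc, La, Lb, Lc],
  [Lb, Lb, Lb, Lc, Lb, Lb, Lb],
  [Lb, Lb, Lb, Lc, Lb, Lb, Lb, Lc],
  [Lb, Lb, Lb, Lc, La, Lb, Lc, La, Lb],
  [Lb, Lb, Lb, Lc, La, Lb, Lc, La, Lb, Lc],
  [La, La, Lc, La, La],
  [],
  [Lb],
  [La, Lb, Lb, La, Lc, Lb, La],
  [Lb, Lb],
  [Lb, Lb, La, Lc, La, La, La],
  [Lb, Lb, La, Lc, La, Lb, La],
  [La, Lb, Lb, La, Lc, La, Lb, Lc, La, La, Lb],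
  [Lb, Lb, Lb],
  [La, Lb, Lb, La, Lc, La, La],
  [Lb, Lb, La, Lc, La, La, La, Lb],
  [La, Lb, Lb, La, Lc, La, Lb, Lc, La, La],
  [Lb, Lb, La, Lc, La, Lb, La, Lb],
  [Lb, Lb, La, Lc, Lb, La, Lb, Lb, Lc, La, La],
  [La, La, Lb, Lb, La, Lc, La, Lb, Lc, La, Lb, La],
  [La, Lb, Lb, La, Lc, La, Lb, Lc, La, Lb, Lc, La, La],
  [La, Lc],
  [La],
  [La, Lb],
  [Lb, Lb, La, Lc, Lb],
  [La, Lb, Lb],
  [La, Lb, Lb, La, Lc, La, La, La],
  [Lb, Lb, La, Lc, Lb, Lb],
  [La, La, Lb, Lb, La, Lc, La, Lb, Lc, Lb],
  [Lb, Lb, La],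
  [Lb, Lb, La, Lc],
  [Lb, Lb, La, Lc, La, Lb, La, La],
  [La, La, Lb, Lb, La, Lc, La, Lb, Lc],
  [Lb, Lb, La, Lc, Lb, Lb, Lb],
  [Lb, Lb, La, Lc, Lb, Lb, Lb, Lc],
  [La, La, Lb, Lb, La, Lc, La, Lb, Lc, Lb, Lb],
  [Lb, Lb, La, Lc, La, Lb, Lc, La, Lb, Lc],
  [La, La, La, Lc, La],
  [La, Lb, La, Lb, Lc, La, Lb],
  [La, La, Lb, Lc, La],
  [],
  [La, La, Lb, Lc, La, Lb],
  [La, La, Lb, Lb, La, Lc, La],
  [],
  [Lb, Lb, La, Lc, La, Lb, Lc, La],
  [La, Lb, La, Lb, Lc, La],
  [],
  [La, La, Lb, Lb, La, Lc, La, Lb],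
  [La, Lb, Lb, La, Lc, Lb, Lb, Lb, Lc, La, Lb],
  [],
  [La, Lb, Lb, La, Lc, Lb, Lb, Lb, Lc, La],
  [Lb, Lb, La, Lc, La, Lb, Lc, La, Lb],
  [Lb, Lb, La, Lc, La, Lb, Lc, Lb, Lb, Lc, La],
  [La, La, Lc],
  [La, La],
  [La, Lb, La],
  [Lb, Lb, La, Lc, Lb, La],
  [La, La, Lb, Lb],
  [Lb, Lb, La, Lc, La],
  [La, Lb, Lb, La, Lc, Lb, Lb],
  [La, La, Lb, Lb, La, Lc, La, Lb, Lc, La],
  [La, Lb, Lb, La],
  [La, Lb, Lb, La, Lc],
  [La, Lb, Lb, La, Lc, La, Lb],
  [La, Lb, Lb, La, Lc, La, Lb, Lc],
  [Lb, Lb, La, Lc, Lb, La, Lb, Lb],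
  [Lb, Lb, La, Lc, Lb, La, Lb, Lb, Lc],
  [La, Lb, Lb, La, Lc, La, Lb, Lc, La, Lb],
  [La, Lb, Lb, La, Lc, La, Lb, Lc, La, Lb, Lc],
  [La, La, La, Lc, Lb],
  [La, La, Lb, Lc, Lb, Lb, Lb],
  [La, Lb, La, Lb, Lc, Lb, Lb, Lb],
  [La, La, Lb, Lb, La, Lc, Lb],
  [La, La, Lb, Lc, Lb],
  [],
  [],
  [Lb, Lb, La, Lc, La, Lb, Lc, Lb],
  [La, Lb, La, Lb, Lc, Lb],
  [],
  [],
  [La, Lb, Lb, La, Lc, Lb, Lb, Lb, Lc, Lb],
  [La, La, Lb, Lb, La, Lc, Lb, Lb, Lb],
  [Lb, Lb, La, Lc, La, Lb, Lc, Lb, Lb, Lb],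
  [La, Lb, Lb, La, Lc, Lb, Lb, Lb, Lc, Lb, Lb, Lb],
  [Lb, Lb, La, Lc, La, Lb, Lc, Lb, Lb, Lc, Lb],
  [La, La, La, Lc, La, La],
  [La, La, Lb, Lc, Lb, La, Lb],
  [La, La, Lb, Lc, La, La],
  [],
  [La, Lb, La, Lb, Lc, La, La],
  [],
  [La, La, Lb, Lb, La, Lc, La, Lb, La],
  [Lb, Lb, La, Lc, La, Lb, Lc, Lb, La, Lb],
  [La, La, Lb, Lc, La, Lb, La],
  [La, La, Lb, Lb, La, Lc, La, La],
  [],
  [Lb, Lb, La, Lc, La, Lb, Lc, La, La],
  [],
  [La, La, Lb, Lc, Lb, La, Lc, Lb, Lb, Lb, Lc],
  [Lb, Lb, La, Lc, La, Lb, Lc, La, Lb, La],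
  [Lb, Lb, La, Lc, La, Lb, Lc, La, Lb, La, Lc],
  [La, La, La, Lc, Lb, La, Lc, La],
  [La, La, Lb, Lc, La, La, La, Lb, Lc, La, Lb],
  [La, La, Lb, Lb, La, Lc, Lb, La, Lc, La],
  [La, La, Lb, Lc, Lb, La, Lc, Lb],
  [La, La, Lb, Lb, La, Lc, Lb, La, Lc, Lb],
  [La, La, Lb, Lc, Lb, La, Lc, La],
  [La, La, Lb, Lc, Lb, La, Lc, La, Lb, La],
  [La, La, Lb, Lc, Lb, La, Lc, La, Lb, Lc, La],
  [La, La, Lb, Lc, La, La, Lb, Lc, La],
  [La, Lb, La, Lb, Lc, La, La, La, Lc, La, La],
  [La, La, Lb, Lc, Lb, La, Lc, Lb, Lb, La],
  [La, La, Lb, Lb, La, Lc, La, Lb, La, Lb, Lc, Lb],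
  [La, La, Lb, Lc, Lb, La, Lc, Lb, Lb, Lb],
  [La, La, Lb, Lb, La, Lc, La, Lb, La, Lb, Lc, La],
  [La, La, Lb, Lb, La, Lc, La, La, La, Lb, Lc, La, Lb],
  [Lb, Lb, La, Lc, La, Lb, Lc, Lb, La, Lb, Lb, Lc, La],
  [La, La, Lc, La],
  [La, La, La],
  [La, La, Lb],
  [La, Lb, Lb, La, Lc, Lb],
  [La, Lb, La, Lb],
  [La, Lb, Lb, La, Lc, La],
  [Lb, Lb, La, Lc, Lb, La, Lb],
  [La, Lb, Lb, La, Lc, La, Lb, Lc, La],
  [La, La, Lb, Lb, La],
  [Lb, Lb, La, Lc, La, La],
  [Lb, Lb, La, Lc, La, Lb],
  [Lb, Lb, La, Lc, Lb, La, Lb, Lb, Lc, Lb],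
  [La, Lb, Lb, La, Lc, Lb, Lb, Lb],
  [Lb, Lb, La, Lc, Lb, La, Lb, Lb, Lc, La],
  [La, La, Lb, Lb, La, Lc, La, Lb, Lc, La, Lb],
  [La, Lb, Lb, La, Lc, La, Lb, Lc, La, Lb, Lc, La],
  [La, La, La, Lc],
  [La, Lb, La, Lb, Lc, Lb, Lb],
  [La, La, Lb, Lc],
  [],
  [La, Lb, La, Lb, Lc],
  [],
  [La, La, Lb, Lb, La, Lc, Lb, Lb],
  [La, Lb, Lb, La, Lc, Lb, Lb, Lb, Lc, Lb, Lb],
  [La, La, Lb, Lc, Lb, Lb],
  [La, La, Lb, Lb, La, Lc],
  [],
  [Lb, Lb, La, Lc, La, Lb, Lc],
  [],
  [La, Lb, Lb, La, Lc, Lb, Lb, Lb, Lc],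
  [Lb, Lb, La, Lc, La, Lb, Lc, Lb, Lb],
  [Lb, Lb, La, Lc, La, Lb, Lc, Lb, Lb, Lc],
  [La, La, La, Lc, Lb, La],
  [La, La, Lb, Lc, La, Lb, La, Lb],
  [La, La, Lb, Lc, Lb, La, Lb, Lb],
  [La, La, Lb, Lb, La, Lc, Lb, La],
  [La, La, Lb, Lc, La, La, Lb],
  [],
  [],
  [Lb, Lb, La, Lc, La, Lb, Lc, La, La, Lb],
  [La, La, Lb, Lc, Lb, La],
  [],
  [],
  [Lb, Lb, La, Lc, La, Lb, Lc, Lb, La],
  [La, La, Lb, Lb, La, Lc, La, Lb, La, Lb],
  [Lb, Lb, La, Lc, La, Lb, Lc, La, Lb, La, Lb],
  [Lb, Lb, La, Lc, La, Lb, Lc, Lb, La, Lb, Lb],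
  [Lb, Lb, La, Lc, La, Lb, Lc, La, Lb, La, Lc, Lb],
  [La, La, La, Lc, Lb, La, Lc],
  [La, La, Lb, Lc, La, La, Lb, Lc, La, Lb],
  [La, La, Lb, Lb, La, Lc, Lb, La, Lc],
  [La, La, Lb, Lc, Lb, La, Lc, Lb, La, La, La],
  [La, La, Lb, Lc, La, La, Lb, Lc],
  [La, Lb, La, Lb, Lc, La, La, La, Lc, La],
  [La, La, Lb, Lc, Lb, La, Lc, Lb, Lb],
  [La, La, Lb, Lb, La, Lc, La, La, La, Lb, Lc, La],
  [La, La, Lb, Lc, La, La, La, Lb, Lc, La],
  [La, La, Lb, Lc, Lb, La, Lc],
  [La, La, Lb, Lc, Lb, La, Lc, La, Lb],
  [La, La, Lb, Lc, Lb, La, Lc, La, Lb, Lc],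
  [La, La, Lb, Lc, Lb, La, Lc, La, Lb, La, Lb],
  [La, La, Lb, Lb, La, Lc, La, Lb, La, Lb, Lc],
  [La, La, Lb, Lc, Lb, La, Lc, La, Lb, Lc, La, Lb],
  [Lb, Lb, La, Lc, La, Lb, Lc, Lb, La, Lb, Lb, Lc],
  [La, La, La, Lc, La, La, La],
  [La, La, Lb, Lc, Lb, La, Lb, La],
  [La, La, Lb, Lc, La, La, La],
  [],
  [La, La, Lb, Lc, La, La, La, Lb],
  [La, La, Lb, Lb, La, Lc, La, La, La],
  [],
  [Lb, Lb, La, Lc, La, Lb, Lc, La, La, La],
  [La, Lb, La, Lb, Lc, La, La, La],
  [],
  [La, La, Lb, Lb, La, Lc, La, La, La, Lb],
  [Lb, Lb, La, Lc, La, Lb, Lc, Lb, La, Lb, La],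
  [],
  [La, La, Lb, Lc, Lb, La, Lc, Lb, Lb, Lb, Lc, La],
  [Lb, Lb, La, Lc, La, Lb, Lc, La, La, La, Lb],
  [Lb, Lb, La, Lc, La, Lb, Lc, La, Lb, La, Lc, La],
  [La, La, La, Lc, La, La, La, Lc],
  [La, La, Lb, Lc, La, La, La, Lb, Lc, Lb, Lb],
  [La, La, Lb, Lc, La, La, La, Lc],
  [La, La, Lb, Lc, Lb, La, Lc, Lb, La, La],
  [La, La, Lb, Lc, La, La, La, Lb, Lc],
  [La, La, Lb, Lc, Lb, La, Lc, La, La, La],
  [La, La, Lb, Lc, Lb, La, Lc, Lb, La, La, Lb],
  [La, La, Lb, Lb, La, Lc, La, La, La, Lb, Lc, Lb],
  [La, La, Lb, Lc, La, La, La, Lb, Lc, Lb],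
  [La, Lb, La, Lb, Lc, La, La, La, Lc],
  [La, La, Lb, Lc, Lb, La, Lc, La, La, La, Lb],
  [La, La, Lb, Lb, La, Lc, La, La, La, Lb, Lc],
  [La, La, Lb, Lc, Lb, La, Lc, Lb, La, La, Lb, Lb],
  [La, La, Lb, Lc, Lb, La, Lc, Lb, La, La, Lb, Lb, Lc],
  [La, La, Lb, Lb, La, Lc, La, La, La, Lb, Lc, Lb, Lb],
  [Lb, Lb, La, Lc, La, Lb, Lc, La, La, La, Lb, Lc],
  [La, La, La, Lc, Lb, La, Lc, La, La],
  [La, La, Lb, Lb, La, Lc, Lb, La, Lc, Lb, La, Lb],
  [La, La, Lb, Lb, La, Lc, Lb, La, Lc, La, La],
  [La, La, Lb, Lc, Lb, La, Lc, Lb, La],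
  [La, La, Lb, Lc, La, La, Lb, Lc, La, La],
  [La, La, Lb, Lc, Lb, La, Lc, La, Lb, La, La, Lb],
  [La, La, Lb, Lc, Lb, La, Lc, Lb, La, Lb],
  [La, La, Lb, Lb, La, Lc, La, Lb, La, Lb, Lc, Lb, La],
  [La, La, Lb, Lb, La, Lc, Lb, La, Lc, Lb, La],
  [La, La, Lb, Lc, Lb, La, Lc, La, La],
  [La, La, Lb, Lc, Lb, La, Lc, La, Lb, La, La],
  [La, La, Lb, Lc, Lb, La, Lc, La, Lb, Lc, La, La],
  [La, La, Lb, Lc, Lb, La, Lc, Lb, La, Lb, Lb],
  [La, La, Lb, Lb, La, Lc, La, Lb, La, Lb, Lc, La, La],
  [La, La, Lb, Lb, La, Lc, La, La, La, Lb, Lc, La, Lb, La],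
  [Lb, Lb, La, Lc, La, Lb, Lc, Lb, La, Lb, Lb, Lc, La, La],
  [La, La, La, Lc, Lb, La, Lc, La, La, Lc],
  [La, La, Lb, Lc, La, La, Lb, Lc, La, La, Lc, La, Lb],
  [La, La, Lb, Lc, Lb, La, Lc, Lb, La, Lc],
  [La, La, Lb, Lc, Lb, La, Lc, La, La, Lc, Lb],
  [La, La, Lb, Lc, La, La, Lb, Lc, La, La, Lc],
  [La, La, Lb, Lc, Lb, La, Lc, La, La, Lc, La],
  [La, La, Lb, Lc, Lb, La, Lc, Lb, La, Lb, Lc],
  [La, La, Lb, Lc, Lb, La, Lc, La, Lb, La, La, Lc, La],
  [La, La, Lb, Lc, La, La, Lb, Lc, La, La, Lc, La],
  [La, La, Lb, Lc, Lb, La, Lc, La, La, Lc],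
  [La, La, Lb, Lc, Lb, La, Lc, La, La, Lc, La, Lb],
  [La, La, Lb, Lc, Lb, La, Lc, La, Lb, La, La, Lc],
  [La, La, Lb, Lc, Lb, La, Lc, Lb, La, Lb, Lc, Lb],
  [La, La, Lb, Lc, Lb, La, Lc, Lb, La, Lb, Lb, Lc],
  [La, La, Lb, Lc, Lb, La, Lc, La, Lb, La, La, Lc, La, Lb],
  [La, La, Lb, Lb, La, Lc, La, La, La, Lb, Lc, La, Lb, La, Lc]]"

definition jw :: "letter list list list" where
  "jw = [[[], [La, La, La, Lc], [La, Lb], [La, Lb, La, Lb]], [[La, Lb, Lb, Lc], [La], [La, Lb, La], [La, Lb, Lb]], [[La, La], [La, La, Lb], [La, La, Lb, Lb], [La, Lb, Lb, La]], [[La, La, Lb, La], [La, La, La], [La, La, La, Lb], [La, La, La, Lb, Lb]]]"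

lemma chk_reach: "list_all2 (\<lambda>p w. missf p \<or> runL w = p) allL Wall"
  by code_simp

lemma chk_closed: "list_all (\<lambda>p. missf p \<or> list_all (\<lambda>x. \<not> missf (stepL x p)) [La, Lb, Lc]) allL"
  by code_simp

lemma chk_start: "\<not> missf ([False, False, False, True], [False, False, False, True])"
  by code_simp

lemma chk_compl: "list_all (\<lambda>p. missf p = missf (map Not (fst p), map Not (snd p))) allL"
  by code_simp

lemma chk_cnt: "length (filter (\<lambda>p. \<not> missf p \<and> fst p \<noteq> [False, False, False, False] \<and> snd p \<noteq> [False, False, False, False]) allL) = 201"
  "length (filter (\<lambda>p. \<not> missf p \<and> fst p \<noteq> [False, False, False, False] \<and> snd p \<noteq> [True, True, True, True]) allL) = 201"
  "length (filter (\<lambda>p. \<not> missf p \<and> fst p \<noteq> [True, True, True, True] \<and> snd p \<noteq> [True, True, True, True]) allL) = 201"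
  "length (filter (\<lambda>p. \<not> missf p \<and> fst p ! 0) allL) = 116"
  by code_simp+

lemma chk_jw: "list_all (\<lambda>p. list_all (\<lambda>q. F 4 La Lb Lc (jw ! p ! q) 0 = p \<and> F 4 Lb La Lc (jw ! p ! q) 0 = q) [0..<4]) [0..<4]"
  by code_simp

lemma chk_ends: "\<not> missf ([False, False, False, False], [False, False, False, False])"
  "\<not> missf ([True, True, True, True], [True, True, True, True])"
  by code_simp+

lemma chk_bl4: "distinct bl4" by code_simp


lemma enc_len[simp]: "length (enc S) = 4" by (simp add: enc_def)
lemma enc_nth: "i < 4 \<Longrightarrow> enc S ! i = (i \<in> S)" by (simp add: enc_def)

lemma enc_inj: "S \<subseteq> {..<4} \<Longrightarrow> S' \<subseteq> {..<4} \<Longrightarrow> enc S = enc S' \<Longrightarrow> S = S'"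
proof (rule set_eqI)
  fix i assume S: "S \<subseteq> {..<4}" "S' \<subseteq> {..<4}" and e: "enc S = enc S'"
  show "i \<in> S \<longleftrightarrow> i \<in> S'"
  proof (cases "i < 4")
    case True then show ?thesis using e enc_nth by metis
  next
    case False then show ?thesis using S by auto
  qed
qed

definition dec :: "bool list \<Rightarrow> nat set" where "dec xs = {i. i < 4 \<and> xs ! i}"

lemma dec_sub: "dec xs \<subseteq> {..<4}" by (auto simp: dec_def)

lemma enc_dec: "length xs = 4 \<Longrightarrow> enc (dec xs) = xs"
  by (rule nth_equalityI) (auto simp: enc_def dec_def)

lemma len4_cases: "length xs = 4 \<Longrightarrow> \<exists>a b c d. xs = [a, b, c, d]"
  by (simp add: length_Suc_conv eval_nat_numeral) blast

lemma bl4_set: "set bl4 = {xs. length xs = 4}"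
proof (intro set_eqI iffI)
  fix xs :: "bool list" assume "xs \<in> set bl4" then show "xs \<in> {xs. length xs = 4}" by (auto simp: bl4_def)
next
  fix xs :: "bool list" assume "xs \<in> {xs. length xs = 4}"
  then obtain a b c d where "xs = [a, b, c, d]" using len4_cases by blast
  then show "xs \<in> set bl4" by (cases a; cases b; cases c; cases d) (simp_all add: bl4_def)
qed

lemma allL_set: "set allL = {p. length (fst p) = 4 \<and> length (snd p) = 4}"
  by (auto simp: allL_def bl4_set)

lemma allL_distinct: "distinct allL"
  unfolding allL_def using chk_bl4 by (simp add: distinct_product)

lemma upt4: "[0..<4] = [0, 1, 2, 3::nat]" by (simp add: upt_rec)

lemma Sset_snoc: "k \<ge> 2 \<Longrightarrow> Sset k a b c (u @ [x]) = {q. q < k \<and> U_delta k a b c q x \<in> Sset k a b c u}"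
  using Ud_lt by (auto simp: Sset_def F_Cons)

lemma runL_eq: "runL u = (enc (Sset 4 La Lb Lc u), enc (Sset 4 Lb La Lc u))"
proof (induction u rule: rev_induct)
  case Nil
  have "Sset 4 a b c [] = {3}" for a b c by (auto simp: Sset_def)
  then show ?case by (simp add: runL_def enc_def upt4)
next
  case (snoc x u)
  have lt: "U_delta 4 a b c q x < 4" if "q < 4" for a b c q using Ud_lt[of 4 q] that by simp
  have e: "enc (Sset 4 a b c (u @ [x])) = map (\<lambda>q. enc (Sset 4 a b c u) ! U_delta 4 a b c q x) [0..<4]" for a b c
    by (simp add: Sset_snoc enc_def enc_nth lt)
  have "runL (u @ [x]) = stepL x (runL u)" by (simp add: runL_def)
  then show ?case using snoc by (simp add: stepL_def e)
qed

lemma runL_len: "runL u \<in> set allL" by (simp add: runL_eq allL_set)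

lemma runL_notmiss: "\<not> missf (runL u)"
proof (induction u rule: rev_induct)
  case Nil then show ?case using chk_start by (simp add: runL_def)
next
  case (snoc x u)
  have "runL (u @ [x]) = stepL x (runL u)" by (simp add: runL_def)
  moreover have "x \<in> set [La, Lb, Lc]" by (cases x) auto
  ultimately show ?case using chk_closed runL_len[of u] snoc by (auto simp: list_all_iff)
qed

definition A44 :: "(nat set \<times> nat set) set" where
  "A44 = {x \<in> AllP 4 4. \<not> missf (enc (fst x), enc (snd x))}"

lemma Sset_sub: "Sset k a b c u \<subseteq> {..<k}" by (auto simp: Sset_def)

lemma Rset44: "Rset 4 4 La Lb Lc = A44"
proof (intro set_eqI iffI)
  fix x assume "x \<in> Rset 4 4 La Lb Lc"
  then obtain u where x: "x = (Sset 4 La Lb Lc u, Sset 4 Lb La Lc u)" unfolding Rset_def by blast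
  have "x \<in> AllP 4 4" unfolding x AllP_def using Sset_sub by blast
  moreover have "\<not> missf (enc (fst x), enc (snd x))" using runL_notmiss[of u] by (simp add: x runL_eq)
  ultimately show "x \<in> A44" unfolding A44_def by blast
next
  fix x assume x: "x \<in> A44"
  obtain S T where st: "x = (S, T)" by (cases x)
  have sub: "S \<subseteq> {..<4}" "T \<subseteq> {..<4}" and nm: "\<not> missf (enc S, enc T)"
    using x unfolding A44_def AllP_def st by auto
  have "(enc S, enc T) \<in> set allL" by (simp add: allL_set)
  then obtain i where i: "i < length allL" "allL ! i = (enc S, enc T)" by (metis in_set_conv_nth)
  have "missf (allL ! i) \<or> runL (Wall ! i) = allL ! i"
    using chk_reach i(1) by (rule list_all2_nthD)
  then have r: "runL (Wall ! i) = (enc S, enc T)" using i nm by simp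
  have e1: "enc (Sset 4 La Lb Lc (Wall ! i)) = enc S" and e2: "enc (Sset 4 Lb La Lc (Wall ! i)) = enc T"
    using r by (simp_all add: runL_eq)
  have "Sset 4 La Lb Lc (Wall ! i) = S" by (rule enc_inj[OF Sset_sub sub(1) e1])
  moreover have "Sset 4 Lb La Lc (Wall ! i) = T" by (rule enc_inj[OF Sset_sub sub(2) e2])
  ultimately have "x = (Sset 4 La Lb Lc (Wall ! i), Sset 4 Lb La Lc (Wall ! i))" using st by simp
  then show "x \<in> Rset 4 4 La Lb Lc" unfolding Rset_def by (rule range_eqI)
qed

lemma Jfull44: "Jfull 4 4 La Lb Lc"
  unfolding Jfull_def
proof (intro allI impI)
  fix p q :: nat assume "p < 4" "q < 4"
  then have "F 4 La Lb Lc (jw ! p ! q) 0 = p \<and> F 4 Lb La Lc (jw ! p ! q) 0 = q"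
    using chk_jw by (auto simp: list_all_iff)
  then show "\<exists>w. F 4 La Lb Lc w 0 = p \<and> F 4 Lb La Lc w 0 = q" by blast
qed


lemma card_plus1:
  assumes "finite A" "inj_on f (A \<inter> G)" "\<forall>x\<in>A - G. f x = z" "y \<in> A - G" "\<forall>x\<in>A \<inter> G. f x \<noteq> z"
  shows "card (f ` A) = card (A \<inter> G) + 1"
proof -
  have "f ` A = insert z (f ` (A \<inter> G))" using assms(3,4) by (auto simp: image_iff)
  moreover have "z \<notin> f ` (A \<inter> G)" using assms(5) by auto
  moreover have "finite (A \<inter> G)" using assms(1) by simp
  ultimately show ?thesis using card_image[OF assms(2)] by simp
qed

lemma H_and: "(S, T) \<in> AllP m n \<Longrightarrow> Hrel m n (\<and>) (S, T) = S \<times> T"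
  by (auto simp: Hrel_def AllP_def)
lemma H_diff: "(S, T) \<in> AllP m n \<Longrightarrow> Hrel m n (\<lambda>x y. x \<and> \<not> y) (S, T) = S \<times> ({..<n} - T)"
  by (auto simp: Hrel_def AllP_def)
lemma H_or: "Hrel m n (\<or>) (S, T) = {..<m} \<times> {..<n} - ({..<m} - S) \<times> ({..<n} - T)"
  by (auto simp: Hrel_def)

lemma cnt_and:
  assumes "A \<subseteq> AllP m n" "({}, {}) \<in> A"
  shows "card (Hrel m n (\<and>) ` A) = card (A \<inter> {x. fst x \<noteq> {} \<and> snd x \<noteq> {}}) + 1"
proof (rule card_plus1[where z = "{}" and y = "({}, {})"])
  show "finite A" using assms(1) finite_subset unfolding AllP_eq by blast
  show "inj_on (Hrel m n (\<and>)) (A \<inter> {x. fst x \<noteq> {} \<and> snd x \<noteq> {}})"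
  proof (rule inj_onI)
    fix x y assume x: "x \<in> A \<inter> {x. fst x \<noteq> {} \<and> snd x \<noteq> {}}" and y: "y \<in> A \<inter> {x. fst x \<noteq> {} \<and> snd x \<noteq> {}}"
      and e: "Hrel m n (\<and>) x = Hrel m n (\<and>) y"
    obtain S T S' T' where xy: "x = (S, T)" "y = (S', T')" by (cases x, cases y) auto
    have a: "(S, T) \<in> AllP m n" "(S', T') \<in> AllP m n" "S \<noteq> {}" "T \<noteq> {}" "S' \<noteq> {}" "T' \<noteq> {}"
      using x y assms(1) xy by auto
    have "S \<times> T = S' \<times> T'" using e xy H_and[OF a(1)] H_and[OF a(2)] by simp
    then show "x = y" using a xy by (simp add: times_eq_iff)
  qed
  show "\<forall>x\<in>A - {x. fst x \<noteq> {} \<and> snd x \<noteq> {}}. Hrel m n (\<and>) x = {}"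
    using assms(1) by (auto simp: Hrel_def)
  show "({}, {}) \<in> A - {x. fst x \<noteq> {} \<and> snd x \<noteq> {}}" using assms(2) by simp
  show "\<forall>x\<in>A \<inter> {x. fst x \<noteq> {} \<and> snd x \<noteq> {}}. Hrel m n (\<and>) x \<noteq> {}"
    using assms(1) by (auto simp: H_and subset_iff)
qed

lemma cnt_diff:
  assumes "A \<subseteq> AllP m n" "({}, {}) \<in> A"
  shows "card (Hrel m n (\<lambda>x y. x \<and> \<not> y) ` A) = card (A \<inter> {x. fst x \<noteq> {} \<and> snd x \<noteq> {..<n}}) + 1"
proof (rule card_plus1[where z = "{}" and y = "({}, {})"])
  show "finite A" using assms(1) finite_subset unfolding AllP_eq by blast
  show "inj_on (Hrel m n (\<lambda>x y. x \<and> \<not> y)) (A \<inter> {x. fst x \<noteq> {} \<and> snd x \<noteq> {..<n}})"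
  proof (rule inj_onI)
    fix x y assume x: "x \<in> A \<inter> {x. fst x \<noteq> {} \<and> snd x \<noteq> {..<n}}" and y: "y \<in> A \<inter> {x. fst x \<noteq> {} \<and> snd x \<noteq> {..<n}}"
      and e: "Hrel m n (\<lambda>x y. x \<and> \<not> y) x = Hrel m n (\<lambda>x y. x \<and> \<not> y) y"
    obtain S T S' T' where xy: "x = (S, T)" "y = (S', T')" by (cases x, cases y) auto
    have a: "(S, T) \<in> AllP m n" "(S', T') \<in> AllP m n" "S \<noteq> {}" "T \<noteq> {..<n}" "S' \<noteq> {}" "T' \<noteq> {..<n}"
      using x y assms(1) xy by auto
    have sub: "T \<subseteq> {..<n}" "T' \<subseteq> {..<n}" using a by (auto simp: AllP_def)
    have ne: "{..<n} - T \<noteq> {}" "{..<n} - T' \<noteq> {}" using sub a by auto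
    have "S \<times> ({..<n} - T) = S' \<times> ({..<n} - T')" using e xy H_diff[OF a(1)] H_diff[OF a(2)] by simp
    then have "S = S'" "{..<n} - T = {..<n} - T'" using ne a by (auto simp: times_eq_iff)
    then show "x = y" using sub xy by blast
  qed
  show "\<forall>x\<in>A - {x. fst x \<noteq> {} \<and> snd x \<noteq> {..<n}}. Hrel m n (\<lambda>x y. x \<and> \<not> y) x = {}"
    using assms(1) by (auto simp: Hrel_def AllP_def)
  show "({}, {}) \<in> A - {x. fst x \<noteq> {} \<and> snd x \<noteq> {..<n}}" using assms(2) by simp
  show "\<forall>x\<in>A \<inter> {x. fst x \<noteq> {} \<and> snd x \<noteq> {..<n}}. Hrel m n (\<lambda>x y. x \<and> \<not> y) x \<noteq> {}"
  proof (intro ballI notI)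
    fix x assume x: "x \<in> A \<inter> {x. fst x \<noteq> {} \<and> snd x \<noteq> {..<n}}" and e0: "Hrel m n (\<lambda>x y. x \<and> \<not> y) x = {}"
    obtain S T where xy: "x = (S, T)" by (cases x)
    have a: "(S, T) \<in> A" "S \<noteq> {}" "T \<noteq> {..<n}" using x xy by auto
    have e: "Hrel m n (\<lambda>x y. x \<and> \<not> y) (S, T) = {}" using e0 xy by simp
    have "T \<subseteq> {..<n}" using a assms(1) by (auto simp: AllP_def)
    then have "{..<n} - T \<noteq> {}" using a by auto
    then show False using e a assms(1) by (auto simp: H_diff subset_iff)
  qed
qed

lemma cnt_or:
  assumes "A \<subseteq> AllP m n" "({..<m}, {..<n}) \<in> A" "m \<ge> 1" "n \<ge> 1"
  shows "card (Hrel m n (\<or>) ` A) = card (A \<inter> {x. fst x \<noteq> {..<m} \<and> snd x \<noteq> {..<n}}) + 1"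
proof (rule card_plus1[where z = "{..<m} \<times> {..<n}" and y = "({..<m}, {..<n})"])
  show "finite A" using assms(1) finite_subset unfolding AllP_eq by blast
  show "inj_on (Hrel m n (\<or>)) (A \<inter> {x. fst x \<noteq> {..<m} \<and> snd x \<noteq> {..<n}})"
  proof (rule inj_onI)
    fix x y assume x: "x \<in> A \<inter> {x. fst x \<noteq> {..<m} \<and> snd x \<noteq> {..<n}}" and y: "y \<in> A \<inter> {x. fst x \<noteq> {..<m} \<and> snd x \<noteq> {..<n}}"
      and e0: "Hrel m n (\<or>) x = Hrel m n (\<or>) y"
    obtain S T S' T' where xy: "x = (S, T)" "y = (S', T')" by (cases x, cases y) auto
    have a: "(S, T) \<in> AllP m n" "(S', T') \<in> AllP m n" "S \<noteq> {..<m}" "T \<noteq> {..<n}" "S' \<noteq> {..<m}" "T' \<noteq> {..<n}"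
      using x y assms(1) xy by auto
    have e: "Hrel m n (\<or>) (S, T) = Hrel m n (\<or>) (S', T')" using e0 xy by simp
    have sub: "S \<subseteq> {..<m}" "S' \<subseteq> {..<m}" "T \<subseteq> {..<n}" "T' \<subseteq> {..<n}" using a by (auto simp: AllP_def)
    have ne: "{..<m} - S \<noteq> {}" "{..<m} - S' \<noteq> {}" "{..<n} - T \<noteq> {}" "{..<n} - T' \<noteq> {}" using sub a by auto
    have "({..<m} - S) \<times> ({..<n} - T) = ({..<m} - S') \<times> ({..<n} - T')"
    proof -
      have "({..<m} - S) \<times> ({..<n} - T) = {..<m} \<times> {..<n} - Hrel m n (\<or>) (S, T)" by (auto simp: H_or)
      also have "\<dots> = {..<m} \<times> {..<n} - Hrel m n (\<or>) (S', T')" using e by simp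
      also have "\<dots> = ({..<m} - S') \<times> ({..<n} - T')" by (auto simp: H_or)
      finally show ?thesis .
    qed
    then have "{..<m} - S = {..<m} - S'" "{..<n} - T = {..<n} - T'" using ne by (auto simp: times_eq_iff)
    then show "x = y" using sub xy by blast
  qed
  show "\<forall>x\<in>A - {x. fst x \<noteq> {..<m} \<and> snd x \<noteq> {..<n}}. Hrel m n (\<or>) x = {..<m} \<times> {..<n}"
    by (auto simp: Hrel_def)
  show "({..<m}, {..<n}) \<in> A - {x. fst x \<noteq> {..<m} \<and> snd x \<noteq> {..<n}}" using assms(2) by simp
  show "\<forall>x\<in>A \<inter> {x. fst x \<noteq> {..<m} \<and> snd x \<noteq> {..<n}}. Hrel m n (\<or>) x \<noteq> {..<m} \<times> {..<n}"
  proof (intro ballI notI)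
    fix x assume x: "x \<in> A \<inter> {x. fst x \<noteq> {..<m} \<and> snd x \<noteq> {..<n}}" and e0: "Hrel m n (\<or>) x = {..<m} \<times> {..<n}"
    obtain S T where xy: "x = (S, T)" by (cases x)
    have a: "(S, T) \<in> A" "S \<noteq> {..<m}" "T \<noteq> {..<n}" using x xy by auto
    have e: "Hrel m n (\<or>) (S, T) = {..<m} \<times> {..<n}" using e0 xy by simp
    have sub: "S \<subseteq> {..<m}" "T \<subseteq> {..<n}" using a assms(1) by (auto simp: AllP_def)
    obtain p q where "p < m" "p \<notin> S" "q < n" "q \<notin> T" using sub a by blast
    then have "(p, q) \<notin> Hrel m n (\<or>) (S, T)" by (simp add: Hrel_def)
    then show False using e \<open>p < m\<close> \<open>q < n\<close> by simp
  qed
qed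

lemma cnt_xor:
  assumes "A \<subseteq> AllP m n" "\<And>S T. (S, T) \<in> A \<Longrightarrow> ({..<m} - S, {..<n} - T) \<in> A" "m \<ge> 1" "n \<ge> 1"
  shows "card (Hrel m n (\<noteq>) ` A) = card (A \<inter> {x. 0 \<in> fst x})"
proof -
  define X where "X = A \<inter> {x. 0 \<in> fst x}"
  have e: "Hrel m n (\<noteq>) ` A = Hrel m n (\<noteq>) ` X"
  proof (intro set_eqI iffI)
    fix Z assume "Z \<in> Hrel m n (\<noteq>) ` A"
    then obtain S T where st: "(S, T) \<in> A" "Z = Hrel m n (\<noteq>) (S, T)" by auto
    have sub: "S \<subseteq> {..<m}" "T \<subseteq> {..<n}" using st assms(1) by (auto simp: AllP_def)
    show "Z \<in> Hrel m n (\<noteq>) ` X"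
    proof (cases "0 \<in> S")
      case True then show ?thesis using st by (auto simp: X_def)
    next
      case False
      have "Z = Hrel m n (\<noteq>) ({..<m} - S, {..<n} - T)" using st sub by (auto simp: Hrel_def)
      moreover have "({..<m} - S, {..<n} - T) \<in> X" using False assms st by (auto simp: X_def)
      ultimately show ?thesis by blast
    qed
  next
    fix Z assume "Z \<in> Hrel m n (\<noteq>) ` X"
    then show "Z \<in> Hrel m n (\<noteq>) ` A" unfolding X_def by blast
  qed
  have inj: "inj_on (Hrel m n (\<noteq>)) X"
  proof (rule inj_onI)
    fix x y assume x: "x \<in> X" and y: "y \<in> X" and eq: "Hrel m n (\<noteq>) x = Hrel m n (\<noteq>) y"
    obtain S T S' T' where xy: "x = (S, T)" "y = (S', T')" by (cases x, cases y) auto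
    have sub: "S \<subseteq> {..<m}" "T \<subseteq> {..<n}" "S' \<subseteq> {..<m}" "T' \<subseteq> {..<n}" "0 \<in> S" "0 \<in> S'"
      using x y assms(1) unfolding xy X_def AllP_def by auto
    have mem: "((p \<in> S) \<noteq> (q \<in> T)) = ((p \<in> S') \<noteq> (q \<in> T'))" if pq: "p < m" "q < n" for p q
    proof -
      have "(p, q) \<in> Hrel m n (\<noteq>) (S, T) \<longleftrightarrow> (p, q) \<in> Hrel m n (\<noteq>) (S', T')" using eq xy by simp
      then show ?thesis using pq by (simp add: Hrel_def)
    qed
    have TT: "T = T'"
    proof (rule set_eqI)
      fix q show "q \<in> T \<longleftrightarrow> q \<in> T'"
        using mem[of 0 q] sub assms by (cases "q < n") auto
    qed
    have "S = S'"
    proof (rule set_eqI)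
      fix p show "p \<in> S \<longleftrightarrow> p \<in> S'"
        using mem[of p 0] sub assms TT by (cases "p < m") auto
    qed
    then show "x = y" using TT xy by simp
  qed
  show ?thesis unfolding e X_def[symmetric] using card_image[OF inj] .
qed


definition encP :: "nat set \<times> nat set \<Rightarrow> bool list \<times> bool list" where
  "encP x = (enc (fst x), enc (snd x))"

lemma encP_inj: "inj_on encP (AllP 4 4)"
proof (rule inj_onI)
  fix x y assume x: "x \<in> AllP 4 4" and y: "y \<in> AllP 4 4" and e: "encP x = encP y"
  obtain S T S' T' where xy: "x = (S, T)" "y = (S', T')" by (cases x, cases y) auto
  have sub: "S \<subseteq> {..<4}" "T \<subseteq> {..<4}" "S' \<subseteq> {..<4}" "T' \<subseteq> {..<4}"
    using x y xy by (auto simp: AllP_def)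
  have "enc S = enc S'" "enc T = enc T'" using e xy by (simp_all add: encP_def)
  then have "S = S'" "T = T'" using enc_inj sub by blast+
  then show "x = y" using xy by simp
qed

lemma cnt_enc:
  assumes "\<And>x. x \<in> AllP 4 4 \<Longrightarrow> g x = gL (encP x)"
  shows "card {x \<in> AllP 4 4. g x} = length (filter gL allL)"
proof -
  have "encP ` {x \<in> AllP 4 4. g x} = set (filter gL allL)"
  proof (intro set_eqI iffI)
    fix p assume "p \<in> encP ` {x \<in> AllP 4 4. g x}"
    then obtain x where x: "x \<in> AllP 4 4" "g x" "p = encP x" by blast
    then show "p \<in> set (filter gL allL)" using assms[OF x(1)] by (simp add: allL_set encP_def)
  next
    fix p assume "p \<in> set (filter gL allL)"
    then have p: "length (fst p) = 4" "length (snd p) = 4" "gL p" by (auto simp: allL_set)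
    define x where "x = (dec (fst p), dec (snd p))"
    have x: "x \<in> AllP 4 4" "encP x = p" using p dec_sub enc_dec by (auto simp: x_def AllP_def encP_def)
    then have gx: "g x" using assms p by simp
    show "p \<in> encP ` {x \<in> AllP 4 4. g x}"
      by (rule image_eqI[where x = x and f = encP, OF x(2)[symmetric]]) (use x gx in simp)
  qed
  moreover have "inj_on encP {x \<in> AllP 4 4. g x}" by (rule inj_on_subset[OF encP_inj]) auto
  ultimately have "card {x \<in> AllP 4 4. g x} = card (set (filter gL allL))"
    using card_image by fastforce
  also have "\<dots> = length (filter gL allL)" by (rule distinct_card[OF distinct_filter[OF allL_distinct]])
  finally show ?thesis .
qed

lemma enc_empty: "enc {} = [False, False, False, False]" by (simp add: enc_def upt4)
lemma enc_full: "enc {..<4} = [True, True, True, True]" by (simp add: enc_def upt4)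
lemma enc_empty_iff: "S \<subseteq> {..<4} \<Longrightarrow> S = {} \<longleftrightarrow> enc S = [False, False, False, False]"
  using enc_inj[of S "{}"] enc_empty by auto
lemma enc_full_iff: "S \<subseteq> {..<4} \<Longrightarrow> S = {..<4} \<longleftrightarrow> enc S = [True, True, True, True]"
  using enc_inj[of S "{..<4}"] enc_full by auto
lemma enc_compl: "enc ({..<4} - S) = map Not (enc S)" by (simp add: enc_def)

lemma A44_sub: "A44 \<subseteq> AllP 4 4" by (auto simp: A44_def)

lemma A44_ends: "({}, {}) \<in> A44" "({..<4}, {..<4}) \<in> A44"
  using chk_ends by (auto simp: A44_def AllP_def enc_empty enc_full)

lemma A44_compl: "(S, T) \<in> A44 \<Longrightarrow> ({..<4} - S, {..<4} - T) \<in> A44"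
proof -
  assume st: "(S, T) \<in> A44"
  then have "(enc S, enc T) \<in> set allL" by (simp add: allL_set)
  then have "missf (enc S, enc T) = missf (map Not (enc S), map Not (enc T))"
    using chk_compl by (auto simp: list_all_iff)
  then show ?thesis using st by (auto simp: A44_def AllP_def enc_compl)
qed

lemma case44:
  defines "K \<equiv> reversal (U 4 La Lb Lc)" and "L \<equiv> reversal (U 4 Lb La Lc)"
  shows "sc (K \<union> L) = 202 \<and> sc (K \<inter> L) = 202 \<and> sc (K - L) = 202 \<and> sc (symdiff K L) = 116"
proof -
  have gen: "sc {w. op (w \<in> K) (w \<in> L)} = card (Hrel 4 4 op ` A44)" for op
    using sc_via_R[of 4 4 La Lb Lc op] Jfull44 Rset44 unfolding K_def L_def by simp
  have e: "K \<union> L = {w. (w \<in> K) \<or> (w \<in> L)}" "K \<inter> L = {w. (w \<in> K) \<and> (w \<in> L)}"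
       "K - L = {w. (w \<in> K) \<and> \<not> (w \<in> L)}" "symdiff K L = {w. (w \<in> K) \<noteq> (w \<in> L)}"
    by (auto simp: symdiff_def)
  have sub: "S \<subseteq> {..<4}" "T \<subseteq> {..<4}" if "(S, T) \<in> AllP 4 4" for S T using that by (auto simp: AllP_def)
  have c1: "card (A44 \<inter> {x. fst x \<noteq> {} \<and> snd x \<noteq> {}}) = 201"
  proof -
    have "A44 \<inter> {x. fst x \<noteq> {} \<and> snd x \<noteq> {}} = {x \<in> AllP 4 4. \<not> missf (encP x) \<and> fst x \<noteq> {} \<and> snd x \<noteq> {}}"
      by (auto simp: A44_def encP_def)
    also have "card \<dots> = length (filter (\<lambda>p. \<not> missf p \<and> fst p \<noteq> [False, False, False, False] \<and> snd p \<noteq> [False, False, False, False]) allL)"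
    proof (rule cnt_enc)
      fix x assume "x \<in> AllP 4 4"
      then obtain S T where x: "x = (S, T)" "S \<subseteq> {..<4}" "T \<subseteq> {..<4}" by (auto simp: AllP_def)
      show "(\<not> missf (encP x) \<and> fst x \<noteq> {} \<and> snd x \<noteq> {}) = (\<not> missf (encP x) \<and> fst (encP x) \<noteq> [False, False, False, False] \<and> snd (encP x) \<noteq> [False, False, False, False])"
        using enc_empty_iff[OF x(2)] enc_empty_iff[OF x(3)] by (simp add: x encP_def)
    qed
    finally show ?thesis using chk_cnt(1) by simp
  qed
  have c2: "card (A44 \<inter> {x. fst x \<noteq> {} \<and> snd x \<noteq> {..<4}}) = 201"
  proof -
    have "A44 \<inter> {x. fst x \<noteq> {} \<and> snd x \<noteq> {..<4}} = {x \<in> AllP 4 4. \<not> missf (encP x) \<and> fst x \<noteq> {} \<and> snd x \<noteq> {..<4}}"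
      by (auto simp: A44_def encP_def)
    also have "card \<dots> = length (filter (\<lambda>p. \<not> missf p \<and> fst p \<noteq> [False, False, False, False] \<and> snd p \<noteq> [True, True, True, True]) allL)"
    proof (rule cnt_enc)
      fix x assume "x \<in> AllP 4 4"
      then obtain S T where x: "x = (S, T)" "S \<subseteq> {..<4}" "T \<subseteq> {..<4}" by (auto simp: AllP_def)
      show "(\<not> missf (encP x) \<and> fst x \<noteq> {} \<and> snd x \<noteq> {..<4}) = (\<not> missf (encP x) \<and> fst (encP x) \<noteq> [False, False, False, False] \<and> snd (encP x) \<noteq> [True, True, True, True])"
        using enc_empty_iff[OF x(2)] enc_full_iff[OF x(3)] by (simp add: x encP_def)
    qed
    finally show ?thesis using chk_cnt(2) by simp
  qed
  have c3: "card (A44 \<inter> {x. fst x \<noteq> {..<4} \<and> snd x \<noteq> {..<4}}) = 201"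
  proof -
    have "A44 \<inter> {x. fst x \<noteq> {..<4} \<and> snd x \<noteq> {..<4}} = {x \<in> AllP 4 4. \<not> missf (encP x) \<and> fst x \<noteq> {..<4} \<and> snd x \<noteq> {..<4}}"
      by (auto simp: A44_def encP_def)
    also have "card \<dots> = length (filter (\<lambda>p. \<not> missf p \<and> fst p \<noteq> [True, True, True, True] \<and> snd p \<noteq> [True, True, True, True]) allL)"
    proof (rule cnt_enc)
      fix x assume "x \<in> AllP 4 4"
      then obtain S T where x: "x = (S, T)" "S \<subseteq> {..<4}" "T \<subseteq> {..<4}" by (auto simp: AllP_def)
      show "(\<not> missf (encP x) \<and> fst x \<noteq> {..<4} \<and> snd x \<noteq> {..<4}) = (\<not> missf (encP x) \<and> fst (encP x) \<noteq> [True, True, True, True] \<and> snd (encP x) \<noteq> [True, True, True, True])"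
        using enc_full_iff[OF x(2)] enc_full_iff[OF x(3)] by (simp add: x encP_def)
    qed
    finally show ?thesis using chk_cnt(3) by simp
  qed
  have c4: "card (A44 \<inter> {x. 0 \<in> fst x}) = 116"
  proof -
    have "A44 \<inter> {x. 0 \<in> fst x} = {x \<in> AllP 4 4. \<not> missf (encP x) \<and> 0 \<in> fst x}"
      by (auto simp: A44_def encP_def)
    also have "card \<dots> = length (filter (\<lambda>p. \<not> missf p \<and> fst p ! 0) allL)"
      by (rule cnt_enc) (simp add: encP_def enc_nth)
    finally show ?thesis using chk_cnt(4) by simp
  qed
  have "card (Hrel 4 4 (\<or>) ` A44) = 202" using cnt_or[OF A44_sub A44_ends(2)] c3 by simp
  moreover have "card (Hrel 4 4 (\<and>) ` A44) = 202" using cnt_and[OF A44_sub A44_ends(1)] c1 by simp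
  moreover have "card (Hrel 4 4 (\<lambda>x y. x \<and> \<not> y) ` A44) = 202" using cnt_diff[OF A44_sub A44_ends(1)] c2 by simp
  moreover have "card (Hrel 4 4 (\<noteq>) ` A44) = 116" using cnt_xor[OF A44_sub A44_compl] c4 by simp
  ultimately show ?thesis
    using e gen[of "(\<or>)"] gen[of "(\<and>)"] gen[of "\<lambda>x y. x \<and> \<not> y"] gen[of "(\<noteq>)"] by simp
qed


theorem lemma1:
  fixes m n :: nat
  assumes "m \<ge> 3" and "n \<ge> 3"
  shows "let K = reversal (U m La Lb Lc); L = reversal (U n Lb La Lc) in
    ((m, n) \<noteq> (4, 4) \<longrightarrow>
       sc (K \<union> L) = (2^m - 1) * (2^n - 1) + 1 \<and>
       sc (K \<inter> L) = (2^m - 1) * (2^n - 1) + 1 \<and>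
       sc (K - L) = (2^m - 1) * (2^n - 1) + 1 \<and>
       sc (symdiff K L) = 2^(m + n - 1)) \<and>
    ((m, n) = (4, 4) \<longrightarrow>
       sc (K \<union> L) = 202 \<and> sc (K \<inter> L) = 202 \<and> sc (K - L) = 202 \<and>
       sc (symdiff K L) = 116)"
  unfolding Let_def
proof (rule conjI; rule impI)
  assume "(m, n) \<noteq> (4, 4)"
  then show "sc (reversal (U m La Lb Lc) \<union> reversal (U n Lb La Lc)) = (2^m - 1) * (2^n - 1) + 1 \<and>
     sc (reversal (U m La Lb Lc) \<inter> reversal (U n Lb La Lc)) = (2^m - 1) * (2^n - 1) + 1 \<and>
     sc (reversal (U m La Lb Lc) - reversal (U n Lb La Lc)) = (2^m - 1) * (2^n - 1) + 1 \<and>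
     sc (symdiff (reversal (U m La Lb Lc)) (reversal (U n Lb La Lc))) = 2^(m + n - 1)"
    by (rule general_case[OF assms])
next
  assume "(m, n) = (4, 4)"
  then have mn: "m = 4" "n = 4" by auto
  show "sc (reversal (U m La Lb Lc) \<union> reversal (U n Lb La Lc)) = 202 \<and>
     sc (reversal (U m La Lb Lc) \<inter> reversal (U n Lb La Lc)) = 202 \<and>
     sc (reversal (U m La Lb Lc) - reversal (U n Lb La Lc)) = 202 \<and>
     sc (symdiff (reversal (U m La Lb Lc)) (reversal (U n Lb La Lc))) = 116"
    unfolding mn by (rule case44)
qed

end
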